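(* Let $\mathcal{T}^{pl}$ be the vector space spanned by the set $T^{pl}$ of planar rooted trees, $\mathcal{T}$ the vector space spanned by the set $T$ of (non-planar) rooted trees, $\pi:\mathcal{T}^{pl}\to\mathcal{T}$ the linear "forget planarity" projection, and $\Psi:\mathcal{T}^{pl}\to\mathcal{T}^{pl}$ the linear map with $\Psi(\bullet)=\bullet$ and $\Psi(\sigma_1\circ\!\!\searrow\sigma_2)=\Psi(\sigma_1)\searrow\Psi(\sigma_2)$ for all planar rooted trees $\sigma_1,\sigma_2$. Put $\overline{\Psi}=\pi\circ\Psi$. Then for every planar rooted tree $\tau$, $$\overline{\Psi}(\tau)=\sum_{s\in T}\alpha(s,\tau)\,s,$$ where the coefficients $\alpha(s,\tau)$ are nonnegative integers, and $$\alpha(s,\tau)=\overline{b}(s,\tau):=\frac{\tilde b(s,\tau)}{sym(s)},$$ where $sym(s)$ is the symmetry factor of $s$ and $\tilde b(s,\tau)$ is the number of bijections $\varphi:V(s)\to V(\tau)$ which are increasing from $(V(s),<)$ into $(V(\tau),\lll)$ and such that $\varphi^{-1}$ is increasing from $(V(\tau),<)$ into $(V(s),<)$.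
   Context: A rooted tree is a finite oriented tree with a distinguished vertex (the root) having no outgoing edge, every other vertex having exactly one outgoing edge; it is planar if endowed with an embedding in the plane (so the branches at each vertex are ordered left to right). $\bullet$ denotes the one-vertex tree. $V(\sigma)$ is the vertex set of a tree $\sigma$. Every planar rooted tree is $B_+(\tau_1\cdots\tau_k)$, obtained by connecting the roots of the ordered list of planar trees $\tau_1,\dots,\tau_k$ to a new root. The left Butcher product is $\sigma\circ\!\!\searrow\tau:=B_+(\sigma\tau_1\cdots\tau_k)$ when $\tau=B_+(\tau_1\cdots\tau_k)$ (graft the root of $\sigma$ as the new leftmost branch at the root of $\tau$); every planar rooted tree with at least two vertices is uniquely of the form $\sigma_1\circ\!\!\searrow\sigma_2$, so $\Psi$ is well defined recursively. The left grafting is the bilinear product $\sigma\searrow\tau=\sum_{v\in V(\tau)}\sigma\searrow_v\tau$, where $\sigma\searrow_v\tau$ is obtained by grafting the root of $\sigma$ onto the vertex $v$ of $\tau$ so that $\sigma$ becomes the leftmost branch at $v$. Partial order $<$ on the vertices of a tree: $v<w$ if $v\neq w$ and the path from the root to $w$ passes through $v$. Total order $\lll$ on $V(\tau)$ for a planar tree $\tau$, defined recursively: for $\tau=\tau_1\circ\!\!\searrow\tau_2$, $v\lll w$ iff ($v\lll w$ inside $V(\tau_1)$ or inside $V(\tau_2)$) or ($v\in V(\tau_2)$ and $w\in V(\tau_1)$). A map $f$ is increasing from $(A,\prec_A)$ into $(B,\prec_B)$ if $a\prec_A a'$ implies $f(a)\prec_B f(a')$. The symmetry factor $sym(s)$ of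 a non-planar rooted tree $s$ is the number of bijections $V(s)\to V(s)$ which are increasing from $(V(s),<)$ onto $(V(s),<)$ (i.e. tree automorphisms). *)

theory Defs
  imports Complex_Main "HOL-Library.Multiset" "HOL-Library.Poly_Mapping" "HOL-Library.FuncSet"
    "HOL-Library.Sublist"
begin

datatype ptree = Node "ptree list"

datatype rtree = RNode "rtree multiset"

definition bullet :: ptree where "bullet = Node []"

fun lbutcher :: "ptree \<Rightarrow> ptree \<Rightarrow> ptree" where
  "lbutcher s (Node ts) = Node (s # ts)"

fun pi_tree :: "ptree \<Rightarrow> rtree" where
  "pi_tree (Node ts) = RNode (mset (map pi_tree ts))"

text \<open>A vertex of a planar tree is encoded by the path of child indices (0 = leftmost)
  leading from the root to it.\<close>
type_synonym vertex = "nat list"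

fun is_vert :: "ptree \<Rightarrow> vertex \<Rightarrow> bool" where
  "is_vert t [] = True"
| "is_vert (Node ts) (i # p) = (i < length ts \<and> is_vert (ts ! i) p)"

definition verts :: "ptree \<Rightarrow> vertex set" where
  "verts t = {p. is_vert t p}"

definition vless :: "vertex \<Rightarrow> vertex \<Rightarrow> bool" where
  "vless v w \<longleftrightarrow> v \<noteq> w \<and> prefix v w"

text \<open>Total order \<lll> on the vertices of a planar tree, defined recursively along
  tau = tau1 \<circ>\<searrow> tau2 where tau = Node (tau1 # ts), tau2 = Node ts.
  Inside tau, a vertex 0 # p belongs to the copy of tau1 (as vertex p of tau1);
  the root [] and the vertices (Suc i) # p belong to the copy of tau2
  (as vertices [] resp. i # p of tau2).\<close>
fun in_left :: "vertex \<Rightarrow> bool" where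
  "in_left [] = False"
| "in_left (i # p) = (i = 0)"

fun shift_down :: "vertex \<Rightarrow> vertex" where
  "shift_down [] = []"
| "shift_down (i # p) = (i - 1) # p"

function llless :: "ptree \<Rightarrow> vertex \<Rightarrow> vertex \<Rightarrow> bool" where
  "llless (Node []) v w = False"
| "llless (Node (t1 # ts)) v w =
     (if in_left v \<and> in_left w then llless t1 (tl v) (tl w)
      else if \<not> in_left v \<and> \<not> in_left w then llless (Node ts) (shift_down v) (shift_down w)
      else \<not> in_left v \<and> in_left w)"
  by pat_completeness auto
termination
  by (relation "measure (\<lambda>(t, v, w). size t)") auto

fun graft_at :: "ptree \<Rightarrow> vertex \<Rightarrow> ptree \<Rightarrow> ptree" where
  "graft_at s [] (Node ts) = Node (s # ts)"
| "graft_at s (i # p) (Node ts) = Node (ts[i := graft_at s p (ts ! i)])"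

type_synonym ptree_lin = "ptree \<Rightarrow>\<^sub>0 int"
type_synonym rtree_lin = "rtree \<Rightarrow>\<^sub>0 int"

definition lgraft_basis :: "ptree \<Rightarrow> ptree \<Rightarrow> ptree_lin" where
  "lgraft_basis s t = (\<Sum>v\<in>verts t. frag_of (graft_at s v t))"

definition lgraft :: "ptree_lin \<Rightarrow> ptree_lin \<Rightarrow> ptree_lin" where
  "lgraft f g = frag_extend (\<lambda>a. frag_extend (\<lambda>b. lgraft_basis a b) g) f"

function Psi_basis :: "ptree \<Rightarrow> ptree_lin" where
  "Psi_basis (Node []) = frag_of (Node [])"
| "Psi_basis (Node (t1 # ts)) = lgraft (Psi_basis t1) (Psi_basis (Node ts))"
  by pat_completeness auto
termination
  by (relation "measure size") auto

definition Psi :: "ptree_lin \<Rightarrow> ptree_lin" where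
  "Psi = frag_extend Psi_basis"

definition pi_lin :: "ptree_lin \<Rightarrow> rtree_lin" where
  "pi_lin = frag_extend (\<lambda>t. frag_of (pi_tree t))"

definition Psibar :: "ptree_lin \<Rightarrow> rtree_lin" where
  "Psibar f = pi_lin (Psi f)"

text \<open>Symmetry factor of the non-planar tree pi_tree sigma, computed on the planar
  representative sigma: number of bijections V \<rightarrow> V increasing for <.\<close>
definition sym_factor :: "ptree \<Rightarrow> nat" where
  "sym_factor \<sigma> = card {f \<in> verts \<sigma> \<rightarrow>\<^sub>E verts \<sigma>. bij_betw f (verts \<sigma>) (verts \<sigma>) \<and>
       (\<forall>v\<in>verts \<sigma>. \<forall>w\<in>verts \<sigma>. vless v w \<longrightarrow> vless (f v) (f w))}"

text \<open>b-tilde(s, tau) computed on a planar representative sigma of s.\<close>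
definition b_tilde :: "ptree \<Rightarrow> ptree \<Rightarrow> nat" where
  "b_tilde \<sigma> \<tau> = card {\<phi> \<in> verts \<sigma> \<rightarrow>\<^sub>E verts \<tau>. bij_betw \<phi> (verts \<sigma>) (verts \<tau>) \<and>
       (\<forall>v\<in>verts \<sigma>. \<forall>w\<in>verts \<sigma>. vless v w \<longrightarrow> llless \<tau> (\<phi> v) (\<phi> w)) \<and>
       (\<forall>x\<in>verts \<tau>. \<forall>y\<in>verts \<tau>. vless x y \<longrightarrow>
           vless (inv_into (verts \<sigma>) \<phi> x) (inv_into (verts \<sigma>) \<phi> y))}"

end

theory Submission imports Defs "HOL-Combinatorics.List_Permutation" begin

lemma is_vert_Node_Cons: "is_vert (Node ts) (i#p) \<longleftrightarrow> i < length ts \<and> is_vert (ts!i) p"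
  by simp

lemma verts_Node: "verts (Node ts) = insert [] (\<Union>i<length ts. (Cons i) ` verts (ts!i))"
proof -
  have "is_vert (Node ts) x \<longleftrightarrow> x = [] \<or> (\<exists>i<length ts. \<exists>p. x = i#p \<and> is_vert (ts!i) p)" for x
    by (cases x) auto
  then show ?thesis by (auto simp: verts_def)
qed

lemma finite_verts: "finite (verts t)"
proof (induction t)
  case (Node ts)
  then show ?case by (simp add: verts_Node)
qed

lemma is_vert_prefix: "is_vert t y \<Longrightarrow> prefix x y \<Longrightarrow> is_vert t x"
proof (induction t y arbitrary: x rule: is_vert.induct)
  case (1 t)
  then show ?case by simp
next
  case (2 ts i p)
  then show ?case by (cases x) auto
qed

lemma llless_irrefl0: "v = w \<Longrightarrow> \<not> llless t v w"
  by (induction t v w rule: llless.induct) auto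

lemma llless_irrefl: "\<not> llless t v v"
  using llless_irrefl0 by blast

lemma llless_root: "\<not> llless t v []"
proof (induction t v "[]::vertex" rule: llless.induct)
  case (1 v)
  then show ?case by simp
next
  case (2 t1 ts v)
  then show ?case by auto
qed

section \<open>Path surgery for grafting\<close>

definition ug :: "vertex \<Rightarrow> vertex \<Rightarrow> vertex" where
  "ug v x = (if strict_prefix v x then x[length v := x!length v - 1] else x)"

definition g2 :: "vertex \<Rightarrow> vertex \<Rightarrow> vertex" where
  "g2 v x = (if strict_prefix v x then x[length v := Suc (x!length v)] else x)"

lemma ug_Nil1: "ug [] (j#r) = (j - 1) # r"
  by (simp add: ug_def)
lemma ug_Nil2: "ug v [] = []"
  by (simp add: ug_def)
lemma ug_Cons: "ug (i#v) (j#r) = (if i = j then i # ug v r else j#r)"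
  by (auto simp: ug_def)
lemma g2_Nil1: "g2 [] (j#r) = Suc j # r"
  by (simp add: g2_def)
lemma g2_Nil2: "g2 v [] = []"
  by (simp add: g2_def)
lemma g2_Cons: "g2 (i#v) (j#r) = (if i = j then i # g2 v r else j#r)"
  by (auto simp: g2_def)

lemmas ug_g2_simps = ug_Nil1 ug_Nil2 ug_Cons g2_Nil1 g2_Nil2 g2_Cons

lemma g2_ug: "\<not> prefix (v@[0]) x \<Longrightarrow> g2 v (ug v x) = x"
proof (induction v arbitrary: x)
  case Nil
  then show ?case by (cases x) (auto simp: ug_g2_simps)
next
  case (Cons i v)
  then show ?case by (cases x) (auto simp: ug_g2_simps)
qed

lemma ug_g2: "ug v (g2 v x) = x"
proof (induction v arbitrary: x)
  case Nil
  then show ?case by (cases x) (auto simp: ug_g2_simps)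
next
  case (Cons i v)
  then show ?case by (cases x) (auto simp: ug_g2_simps)
qed

lemma g2_not_inl: "\<not> prefix (v@[0]) (g2 v x)"
proof (induction v arbitrary: x)
  case Nil
  then show ?case by (cases x) (auto simp: ug_g2_simps)
next
  case (Cons i v)
  then show ?case by (cases x) (auto simp: ug_g2_simps)
qed


lemma ug_prefix_iff:
  "\<not> prefix (v@[0]) x \<Longrightarrow> \<not> prefix (v@[0]) y \<Longrightarrow> prefix (ug v x) (ug v y) \<longleftrightarrow> prefix x y"
proof (induction v arbitrary: x y)
  case Nil
  then show ?case apply (cases x; cases y) apply (simp_all add: ug_g2_simps)
    by (metis Suc_pred)
next
  case (Cons i v)
  then show ?case apply (cases x; cases y) apply (simp_all add: ug_g2_simps)
    done
qed

lemma ug_eq_iff: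
  "\<not> prefix (v@[0]) x \<Longrightarrow> \<not> prefix (v@[0]) y \<Longrightarrow> ug v x = ug v y \<longleftrightarrow> x = y"
  by (metis g2_ug)

lemma ug_prefix_mixed:
  "\<not> prefix (v@[0]) x \<Longrightarrow> prefix (v@[0]) y \<Longrightarrow> prefix x y \<longleftrightarrow> prefix (ug v x) v"
proof (induction v arbitrary: x y)
  case Nil
  then show ?case apply (cases x; cases y) apply (simp_all add: ug_g2_simps)
    done
next
  case (Cons i v)
  obtain r' where y: "y = i # r'" "prefix (v@[0]) r'" using Cons.prems(2) by (cases y) auto
  show ?case
  proof (cases x)
    case Nil
    then show ?thesis by (simp add: ug_g2_simps)
  next
    case (Cons j r)
    show ?thesis
    proof (cases "j = i")
      case True
      have "\<not> prefix (v@[0]) r" using Cons.prems(1) \<open>x = j#r\<close> True by simp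
      from Cons.IH[OF this y(2)] show ?thesis using True \<open>x = j#r\<close> y by (simp add: ug_g2_simps)
    next
      case False
      then show ?thesis using \<open>x = j#r\<close> y by (simp add: ug_g2_simps)
    qed
  qed
qed
lemma inl_prefix_not:
  "prefix (v@[0]) x \<Longrightarrow> \<not> prefix (v@[0]) y \<Longrightarrow> \<not> prefix x y"
  using prefix_order.trans by blast

lemma inl_prefix_iff:
  "prefix (v@[0]) x \<Longrightarrow> prefix (v@[0]) y \<Longrightarrow>
     prefix x y \<longleftrightarrow> prefix (drop (Suc (length v)) x) (drop (Suc (length v)) y)"
  by (auto simp: prefix_def)

lemma graft_vert:
  "is_vert t v \<Longrightarrow> is_vert (graft_at s v t) x \<longleftrightarrow>
     (if prefix (v@[0]) x then is_vert s (drop (Suc (length v)) x) else is_vert t (ug v x))"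
proof (induction v arbitrary: t x)
  case Nil
  obtain ts where t: "t = Node ts" by (cases t)
  show ?case
  proof (cases x)
    case Nil
    then show ?thesis by (simp add: t ug_g2_simps)
  next
    case (Cons j r)
    then show ?thesis by (cases j) (auto simp: t ug_g2_simps)
  qed
next
  case (Cons i v)
  obtain ts where t: "t = Node ts" by (cases t)
  have i: "i < length ts" "is_vert (ts!i) v" using Cons.prems t by auto
  show ?case
  proof (cases x)
    case Nil
    then show ?thesis by (simp add: t ug_g2_simps)
  next
    case (Cons j r)
    show ?thesis
    proof (cases "j = i")
      case True
      then show ?thesis using Cons.IH[OF i(2), of r] i by (auto simp: t \<open>x = j#r\<close> ug_g2_simps)
    next
      case False
      then show ?thesis using i by (auto simp: t \<open>x = j#r\<close> ug_g2_simps)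
    qed
  qed
qed


section \<open>Entries\<close>

type_synonym vrel = "(vertex \<times> vertex) set"
type_synonym entry = "ptree \<times> (vertex \<Rightarrow> vertex) \<times> vrel"

fun emb2 :: "vertex \<Rightarrow> vertex" where
  "emb2 [] = []"
| "emb2 (i#p) = Suc i # p"

lemma emb2_inj: "emb2 a = emb2 b \<longleftrightarrow> a = b"
  by (cases a; cases b) auto

lemma emb2_ne: "emb2 a \<noteq> 0 # b"
  by (cases a) auto

lemma emb2_ne': "0 # b \<noteq> emb2 a"
  by (cases a) auto

definition rel :: "ptree \<Rightarrow> vrel" where
  "rel t = {(a,b). a \<in> verts t \<and> b \<in> verts t \<and> vless a b}"

definition LL :: "ptree \<Rightarrow> vrel" where
  "LL t = {(a,b). a \<in> verts t \<and> b \<in> verts t \<and> llless t a b}"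

definition img :: "(vertex \<Rightarrow> vertex) \<Rightarrow> vrel \<Rightarrow> vrel" where
  "img f r = map_prod f f ` r"

definition thg :: "vertex \<Rightarrow> (vertex \<Rightarrow> vertex) \<Rightarrow> (vertex \<Rightarrow> vertex) \<Rightarrow> vertex \<Rightarrow> vertex" where
  "thg v th1 th2 x = (if prefix (v@[0]) x then 0 # th1 (drop (Suc (length v)) x) else emb2 (th2 (ug v x)))"

definition Rg :: "ptree \<Rightarrow> vrel \<Rightarrow> vrel \<Rightarrow> vertex \<Rightarrow> vrel" where
  "Rg t1 R1 R2 p = map_prod (Cons 0) (Cons 0) ` R1 \<union> map_prod emb2 emb2 ` R2 \<union>
     {(emb2 a, 0 # b) | a b. (a = p \<or> (a, p) \<in> R2) \<and> b \<in> verts t1}"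

definition rho :: "entry \<Rightarrow> ptree" where "rho e = fst e"
definition th :: "entry \<Rightarrow> vertex \<Rightarrow> vertex" where "th e = fst (snd e)"
definition RR :: "entry \<Rightarrow> vrel" where "RR e = snd (snd e)"

definition mkE :: "ptree \<Rightarrow> entry \<times> entry \<times> vertex \<Rightarrow> entry" where
  "mkE t1 x = (case x of (e1, e2, v) \<Rightarrow>
     (graft_at (rho e1) v (rho e2), thg v (th e1) (th e2), Rg t1 (RR e1) (RR e2) (th e2 v)))"

function E :: "ptree \<Rightarrow> entry set" where
  "E (Node []) = {(Node [], id, {})}"
| "E (Node (t1 # ts)) = mkE t1 ` {(e1, e2, v). e1 \<in> E t1 \<and> e2 \<in> E (Node ts) \<and> v \<in> verts (rho e2)}"
  by pat_completeness auto
termination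
  by (relation "measure size") auto

lemma verts_Cons: "verts (Node (t1 # ts)) = Cons 0 ` verts t1 \<union> emb2 ` verts (Node ts)"
proof -
  have "is_vert (Node (t1#ts)) x \<longleftrightarrow> (\<exists>q. x = 0 # q \<and> is_vert t1 q) \<or> (\<exists>q. x = emb2 q \<and> is_vert (Node ts) q)" for x
  proof (cases x)
    case Nil
    then show ?thesis by (auto intro: exI[of _ "[]"])
  next
    case (Cons j r)
    then show ?thesis
    proof (cases j)
      case 0
      then show ?thesis using Cons by (auto simp: emb2_ne')
    next
      case (Suc k)
      have "(\<exists>q. Suc k # r = emb2 q \<and> is_vert (Node ts) q) \<longleftrightarrow> is_vert (Node ts) (k # r)"
        by (metis emb2.simps(2) emb2_inj)
      then show ?thesis using Cons Suc by auto
    qed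
  qed
  then show ?thesis by (auto simp: verts_def)
qed

lemma vless_simps:
  "vless (0#a) (0#b) = vless a b"
  "vless (emb2 a) (emb2 b) = vless a b"
  "vless (emb2 a) (0#b) = (a = [])"
  "vless (0#a) (emb2 b) = False"
  "vless [] (0#b) = True"
  by (cases a; cases b; auto simp: vless_def)+

lemma llless_simps:
  "llless (Node (t1#ts)) (0#a) (0#b) = llless t1 a b"
  "llless (Node (t1#ts)) (emb2 a) (emb2 b) = llless (Node ts) a b"
  "llless (Node (t1#ts)) (emb2 a) (0#b) = True"
  "llless (Node (t1#ts)) (0#a) (emb2 b) = False"
  by (cases a; cases b; simp)+


lemma inl_decomp: "prefix (v@[0]) x \<Longrightarrow> x = v @ 0 # drop (Suc (length v)) x"
  by (auto simp: prefix_def)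

lemma graft_verts:
  "v \<in> verts t \<Longrightarrow> x \<in> verts (graft_at s v t) \<longleftrightarrow>
     (if prefix (v@[0]) x then drop (Suc (length v)) x \<in> verts s else ug v x \<in> verts t)"
  using graft_vert by (simp add: verts_def)

lemma vless_prefix_root: "w \<noteq> [] \<Longrightarrow> vless [] w"
  by (simp add: vless_def)

lemma rel_memI: "a \<in> verts t \<Longrightarrow> b \<in> verts t \<Longrightarrow> vless a b \<Longrightarrow> (a, b) \<in> rel t"
  by (simp add: rel_def)

lemma img_mem: "inj_on f (verts t) \<Longrightarrow> a \<in> verts t \<Longrightarrow> b \<in> verts t \<Longrightarrow>
   (f a, f b) \<in> img f (rel t) \<longleftrightarrow> vless a b"
  by (auto simp: img_def rel_def inj_on_def)

lemma step_good:
  assumes b1: "bij_betw th1 (verts r1) (verts t1)" and R1: "R1 = img th1 (rel r1)"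
    and s1: "rel t1 \<subseteq> R1" and l1: "R1 \<subseteq> LL t1"
    and b2: "bij_betw th2 (verts r2) (verts (Node ts))" and R2: "R2 = img th2 (rel r2)"
    and s2: "rel (Node ts) \<subseteq> R2" and l2: "R2 \<subseteq> LL (Node ts)"
    and v: "v \<in> verts r2"
  shows "bij_betw (thg v th1 th2) (verts (graft_at r1 v r2)) (verts (Node (t1#ts)))"
    and "Rg t1 R1 R2 (th2 v) = img (thg v th1 th2) (rel (graft_at r1 v r2))"
    and "rel (Node (t1#ts)) \<subseteq> Rg t1 R1 R2 (th2 v)"
    and "Rg t1 R1 R2 (th2 v) \<subseteq> LL (Node (t1#ts))"
proof -
  let ?\<rho> = "graft_at r1 v r2"
  let ?T = "thg v th1 th2"
  let ?inl = "\<lambda>x. prefix (v@[0]) x"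
  let ?dl = "\<lambda>x. drop (Suc (length v)) x"
  have vr: "x \<in> verts ?\<rho> \<longleftrightarrow> (if ?inl x then ?dl x \<in> verts r1 else ug v x \<in> verts r2)" for x
    using graft_verts[OF v] .
  have Tl: "?inl x \<Longrightarrow> ?T x = 0 # th1 (?dl x)" for x by (simp add: thg_def)
  have Tr: "\<not> ?inl x \<Longrightarrow> ?T x = emb2 (th2 (ug v x))" for x by (simp add: thg_def)
  have gin1: "?inl (v @ 0 # q)" "?dl (v @ 0 # q) = q" for q by auto
  have gin2: "\<not> ?inl (g2 v q)" "ug v (g2 v q) = q" for q by (simp_all add: g2_not_inl ug_g2)
  have i1: "inj_on th1 (verts r1)" and i2: "inj_on th2 (verts r2)"
    using b1 b2 by (auto simp: bij_betw_def)
  have im1: "th1 ` verts r1 = verts t1" and im2: "th2 ` verts r2 = verts (Node ts)"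
    using b1 b2 by (auto simp: bij_betw_def)
  have vless_ll: "?inl x \<Longrightarrow> ?inl y \<Longrightarrow> vless x y \<longleftrightarrow> vless (?dl x) (?dl y)" for x y
    by (metis inl_decomp inl_prefix_iff vless_def)
  have vless_rr: "\<not> ?inl x \<Longrightarrow> \<not> ?inl y \<Longrightarrow> vless x y \<longleftrightarrow> vless (ug v x) (ug v y)" for x y
    by (simp add: vless_def ug_prefix_iff ug_eq_iff)
  have vless_rl: "\<not> ?inl x \<Longrightarrow> ?inl y \<Longrightarrow> vless x y \<longleftrightarrow> prefix (ug v x) v" for x y
    by (metis ug_prefix_mixed vless_def)
  have vless_lr: "?inl x \<Longrightarrow> \<not> ?inl y \<Longrightarrow> \<not> vless x y" for x y
    by (meson inl_prefix_not vless_def)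
  show bij: "bij_betw ?T (verts ?\<rho>) (verts (Node (t1#ts)))"
  proof (rule bij_betw_imageI)
    show "inj_on ?T (verts ?\<rho>)"
    proof (rule inj_onI)
      fix x y assume x: "x \<in> verts ?\<rho>" and y: "y \<in> verts ?\<rho>" and eq: "?T x = ?T y"
      show "x = y"
      proof (cases "?inl x"; cases "?inl y")
        assume a: "?inl x" "?inl y"
        then have "th1 (?dl x) = th1 (?dl y)" using eq Tl by simp
        then have "?dl x = ?dl y" using i1 x y a vr by (auto simp: inj_on_def)
        then show ?thesis using a inl_decomp by metis
      next
        assume a: "?inl x" "\<not> ?inl y"
        then show ?thesis using eq Tl Tr emb2_ne by metis
      next
        assume a: "\<not> ?inl x" "?inl y"
        then show ?thesis using eq Tl Tr emb2_ne by metis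
      next
        assume a: "\<not> ?inl x" "\<not> ?inl y"
        then have "th2 (ug v x) = th2 (ug v y)" using eq Tr emb2_inj by metis
        then have "ug v x = ug v y" using i2 x y a vr by (auto simp: inj_on_def)
        then show ?thesis using a ug_eq_iff by blast
      qed
    qed
    show "?T ` verts ?\<rho> = verts (Node (t1#ts))"
    proof
      show "?T ` verts ?\<rho> \<subseteq> verts (Node (t1#ts))"
      proof
        fix z assume "z \<in> ?T ` verts ?\<rho>"
        then obtain x where x: "x \<in> verts ?\<rho>" "z = ?T x" by auto
        show "z \<in> verts (Node (t1#ts))"
        proof (cases "?inl x")
          case True
          then show ?thesis using x vr Tl im1 verts_Cons by auto
        next
          case False
          then show ?thesis using x vr Tr im2 verts_Cons by auto
        qed
      qed
      show "verts (Node (t1#ts)) \<subseteq> ?T ` verts ?\<rho>"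
      proof
        fix z assume "z \<in> verts (Node (t1#ts))"
        then consider (l) q where "z = 0 # q" "q \<in> verts t1" | (r) q where "z = emb2 q" "q \<in> verts (Node ts)"
          using verts_Cons by blast
        then show "z \<in> ?T ` verts ?\<rho>"
        proof cases
          case l
          then obtain q' where q': "q' \<in> verts r1" "q = th1 q'" using im1 by auto
          have "v @ 0 # q' \<in> verts ?\<rho>" using vr q' by simp
          moreover have "?T (v @ 0 # q') = z" using l q' Tl[OF gin1(1)] by simp
          ultimately show ?thesis by (metis image_eqI)
        next
          case r
          then obtain q' where q': "q' \<in> verts r2" "q = th2 q'" using im2 by auto
          have "g2 v q' \<in> verts ?\<rho>" using vr q' gin2 by simp
          moreover have "?T (g2 v q') = z" using r q' Tr[OF gin2(1)] gin2(2) by simp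
          ultimately show ?thesis by (metis image_eqI)
        qed
      qed
    qed
  qed
  show "Rg t1 R1 R2 (th2 v) = img ?T (rel ?\<rho>)"
  proof
    show "img ?T (rel ?\<rho>) \<subseteq> Rg t1 R1 R2 (th2 v)"
    proof
      fix z assume "z \<in> img ?T (rel ?\<rho>)"
      then obtain x y where z: "z = (?T x, ?T y)" and x: "x \<in> verts ?\<rho>" and y: "y \<in> verts ?\<rho>"
        and xy: "vless x y" by (auto simp: img_def rel_def)
      show "z \<in> Rg t1 R1 R2 (th2 v)"
      proof (cases "?inl x"; cases "?inl y")
        assume a: "?inl x" "?inl y"
        then have "(th1 (?dl x), th1 (?dl y)) \<in> R1"
          using R1 img_mem[OF i1] x y vr vless_ll xy by auto
        then show ?thesis using z a Tl by (auto simp: Rg_def)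
      next
        assume a: "?inl x" "\<not> ?inl y"
        then show ?thesis using vless_lr xy by blast
      next
        assume a: "\<not> ?inl x" "?inl y"
        have u: "ug v x \<in> verts r2" using x a vr by auto
        have "prefix (ug v x) v" using vless_rl a xy by blast
        then have "ug v x = v \<or> vless (ug v x) v" by (auto simp: vless_def)
        then have "th2 (ug v x) = th2 v \<or> (th2 (ug v x), th2 v) \<in> R2"
          using R2 img_mem[OF i2 u v] by auto
        moreover have "th1 (?dl y) \<in> verts t1" using y a vr im1 by auto
        ultimately show ?thesis using z a Tl Tr by (auto simp: Rg_def)
      next
        assume a: "\<not> ?inl x" "\<not> ?inl y"
        then have "(th2 (ug v x), th2 (ug v y)) \<in> R2"
          using R2 img_mem[OF i2] x y vr vless_rr xy by auto
        then show ?thesis using z a Tr by (auto simp: Rg_def)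
      qed
    qed
    show "Rg t1 R1 R2 (th2 v) \<subseteq> img ?T (rel ?\<rho>)"
    proof
      fix z assume "z \<in> Rg t1 R1 R2 (th2 v)"
      then consider (A) a b where "z = (0#a, 0#b)" "(a,b) \<in> R1"
        | (B) a b where "z = (emb2 a, emb2 b)" "(a,b) \<in> R2"
        | (C) a b where "z = (emb2 a, 0 # b)" "a = th2 v \<or> (a, th2 v) \<in> R2" "b \<in> verts t1"
        unfolding Rg_def by blast
      then show "z \<in> img ?T (rel ?\<rho>)"
      proof cases
        case A
        then obtain a' b' where ab: "a = th1 a'" "b = th1 b'" "a' \<in> verts r1" "b' \<in> verts r1" "vless a' b'"
          using R1 by (auto simp: img_def rel_def)
        have "(v@0#a', v@0#b') \<in> rel ?\<rho>"
          using ab vr vless_ll[OF gin1(1) gin1(1)] by (auto simp: rel_def)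
        moreover have "z = map_prod ?T ?T (v@0#a', v@0#b')" using A ab Tl[OF gin1(1)] by simp
        ultimately show ?thesis unfolding img_def by blast
      next
        case B
        then obtain a' b' where ab: "a = th2 a'" "b = th2 b'" "a' \<in> verts r2" "b' \<in> verts r2" "vless a' b'"
          using R2 by (auto simp: img_def rel_def)
        have "(g2 v a', g2 v b') \<in> rel ?\<rho>"
          using ab vr vless_rr[OF gin2(1) gin2(1)] gin2 by (auto simp: rel_def)
        moreover have "z = map_prod ?T ?T (g2 v a', g2 v b')" using B ab Tr[OF gin2(1)] gin2 by simp
        ultimately show ?thesis unfolding img_def by blast
      next
        case C
        obtain b' where b': "b = th1 b'" "b' \<in> verts r1" using C im1 by auto
        have "a \<in> verts (Node ts)" using C l2 im2 v by (auto simp: LL_def)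
        then obtain a' where a': "a = th2 a'" "a' \<in> verts r2" using im2 by auto
        have "a' = v \<or> vless a' v" using C a' img_mem[OF i2 a'(2) v] R2 i2 v by (auto simp: inj_on_def)
        then have pa: "prefix a' v" by (auto simp: vless_def)
        have "(g2 v a', v@0#b') \<in> rel ?\<rho>"
          using a' b' vr vless_rl[OF gin2(1) gin1(1)] gin2 pa by (auto simp: rel_def)
        moreover have "z = map_prod ?T ?T (g2 v a', v@0#b')"
          using C a' b' Tr[OF gin2(1)] Tl[OF gin1(1)] gin2 by simp
        ultimately show ?thesis unfolding img_def by blast
      qed
    qed
  qed
  show "rel (Node (t1#ts)) \<subseteq> Rg t1 R1 R2 (th2 v)"
  proof
    fix z assume z: "z \<in> rel (Node (t1#ts))"
    then obtain x y where xy: "z = (x,y)" "x \<in> verts (Node (t1#ts))" "y \<in> verts (Node (t1#ts))" "vless x y"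
      by (auto simp: rel_def)
    have tv: "th2 v \<in> verts (Node ts)" using im2 v by auto
    from xy(2) consider (l) a where "x = 0 # a" "a \<in> verts t1" | (r) a where "x = emb2 a" "a \<in> verts (Node ts)"
      using verts_Cons by blast
    then show "z \<in> Rg t1 R1 R2 (th2 v)"
    proof cases
      case l
      from xy(3) consider (l') b where "y = 0 # b" "b \<in> verts t1" | (r') b where "y = emb2 b" "b \<in> verts (Node ts)"
        using verts_Cons by blast
      then show ?thesis
      proof cases
        case l'
        then have "(a,b) \<in> R1" using s1 l xy vless_simps by (auto simp: rel_def)
        then show ?thesis using l l' xy by (auto simp: Rg_def)
      next
        case r'
        then show ?thesis using l xy vless_simps by auto
      qed
    next
      case r
      from xy(3) consider (l') b where "y = 0 # b" "b \<in> verts t1" | (r') b where "y = emb2 b" "b \<in> verts (Node ts)"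
        using verts_Cons by blast
      then show ?thesis
      proof cases
        case l'
        then have "a = []" using r xy vless_simps by auto
        moreover have "[] = th2 v \<or> ([], th2 v) \<in> R2"
        proof (cases "th2 v = []")
          case False
          have "[] \<in> verts (Node ts)" by (simp add: verts_def)
          then have "([], th2 v) \<in> rel (Node ts)" using rel_memI tv vless_prefix_root False by blast
          then show ?thesis using s2 by blast
        qed simp
        ultimately have "(emb2 a, 0 # b) \<in> Rg t1 R1 R2 (th2 v)"
          using l' unfolding Rg_def by blast
        then show ?thesis using l' r xy by simp
      next
        case r'
        then have "(a,b) \<in> R2" using s2 r xy vless_simps by (auto simp: rel_def)
        then show ?thesis using r r' xy by (auto simp: Rg_def)
      qed
    qed
  qed
  show "Rg t1 R1 R2 (th2 v) \<subseteq> LL (Node (t1#ts))"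
  proof
    fix z assume "z \<in> Rg t1 R1 R2 (th2 v)"
    then consider (A) a b where "z = (0#a, 0#b)" "(a,b) \<in> R1"
      | (B) a b where "z = (emb2 a, emb2 b)" "(a,b) \<in> R2"
      | (C) a b where "z = (emb2 a, 0 # b)" "a = th2 v \<or> (a, th2 v) \<in> R2" "b \<in> verts t1"
      unfolding Rg_def by blast
    then show "z \<in> LL (Node (t1#ts))"
    proof cases
      case A
      have "a \<in> verts t1" "b \<in> verts t1" "llless t1 a b" using A l1 by (auto simp: LL_def)
      then show ?thesis using A unfolding LL_def verts_Cons by (simp add: llless_simps del: llless.simps)
    next
      case B
      have "a \<in> verts (Node ts)" "b \<in> verts (Node ts)" "llless (Node ts) a b" using B l2 by (auto simp: LL_def)
      then show ?thesis using B unfolding LL_def verts_Cons by (simp add: llless_simps del: llless.simps)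
    next
      case C
      have "a \<in> verts (Node ts)" using C l2 im2 v by (auto simp: LL_def)
      then show ?thesis using C unfolding LL_def verts_Cons by (simp add: llless_simps del: llless.simps)
    qed
  qed
qed


definition good :: "ptree \<Rightarrow> entry \<Rightarrow> bool" where
  "good t e \<longleftrightarrow> bij_betw (th e) (verts (rho e)) (verts t) \<and> RR e = img (th e) (rel (rho e)) \<and>
     rel t \<subseteq> RR e \<and> RR e \<subseteq> LL t"

lemma mkE_simps:
  "rho (mkE t1 (e1, e2, v)) = graft_at (rho e1) v (rho e2)"
  "th (mkE t1 (e1, e2, v)) = thg v (th e1) (th e2)"
  "RR (mkE t1 (e1, e2, v)) = Rg t1 (RR e1) (RR e2) (th e2 v)"
  by (simp_all add: mkE_def rho_def th_def RR_def)

lemma verts_Nil: "verts (Node []) = {[]}"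
  by (simp add: verts_Node)

lemma E_good: "e \<in> E t \<Longrightarrow> good t e"
proof (induction t arbitrary: e rule: E.induct)
  case 1
  have r: "rel (Node []) = {}" by (auto simp: rel_def verts_Nil vless_def)
  from 1 have "e = (Node [], id, {})" by simp
  then show ?case by (simp add: good_def rho_def th_def RR_def r img_def)
next
  case (2 t1 ts)
  have "e \<in> mkE t1 ` {(e1, e2, v). e1 \<in> E t1 \<and> e2 \<in> E (Node ts) \<and> v \<in> verts (rho e2)}"
    using 2(3) by simp
  then obtain d where d: "d \<in> {(e1, e2, v). e1 \<in> E t1 \<and> e2 \<in> E (Node ts) \<and> v \<in> verts (rho e2)}"
    "e = mkE t1 d" by (rule imageE)
  obtain e1 e2 v where "d = (e1, e2, v)" by (cases d)
  then have e: "e = mkE t1 (e1, e2, v)" "e1 \<in> E t1" "e2 \<in> E (Node ts)" "v \<in> verts (rho e2)"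
    using d by auto
  have g1: "good t1 e1" using 2 e by blast
  have g2: "good (Node ts) e2" using 2 e by blast
  have a1: "bij_betw (th e1) (verts (rho e1)) (verts t1)" "RR e1 = img (th e1) (rel (rho e1))"
     "rel t1 \<subseteq> RR e1" "RR e1 \<subseteq> LL t1" using g1 unfolding good_def by auto
  have a2: "bij_betw (th e2) (verts (rho e2)) (verts (Node ts))" "RR e2 = img (th e2) (rel (rho e2))"
     "rel (Node ts) \<subseteq> RR e2" "RR e2 \<subseteq> LL (Node ts)" using g2 unfolding good_def by auto
  note S = step_good[OF a1 a2 e(4)]
  show ?case unfolding good_def e(1) mkE_simps using S by simp
qed

lemma E_finite: "finite (E t)"
proof (induction t rule: E.induct)
  case 1
  then show ?case by simp
next
  case (2 t1 ts)
  have "{(e1, e2, v). e1 \<in> E t1 \<and> e2 \<in> E (Node ts) \<and> v \<in> verts (rho e2)} =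
        Sigma (E t1) (\<lambda>_. Sigma (E (Node ts)) (\<lambda>e2. verts (rho e2)))" by auto
  moreover have "finite (Sigma (E t1) (\<lambda>_. Sigma (E (Node ts)) (\<lambda>e2. verts (rho e2))))"
    using 2 finite_verts by (intro finite_SigmaI) auto
  ultimately show ?case by simp
qed

lemma vless_trans: "vless a b \<Longrightarrow> vless b c \<Longrightarrow> vless a c"
  unfolding vless_def by (metis prefix_order.antisym prefix_order.trans)

lemma img_rel_trans: "inj_on f (verts t) \<Longrightarrow> trans (img f (rel t))"
proof (rule transI)
  fix x y z assume inj: "inj_on f (verts t)" and xy: "(x, y) \<in> img f (rel t)" and yz: "(y, z) \<in> img f (rel t)"
  obtain a b where ab: "x = f a" "y = f b" "a \<in> verts t" "b \<in> verts t" "vless a b"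
    using xy by (auto simp: img_def rel_def)
  obtain b' c where bc: "y = f b'" "z = f c" "b' \<in> verts t" "c \<in> verts t" "vless b' c"
    using yz by (auto simp: img_def rel_def)
  have "b = b'" using inj ab bc by (auto simp: inj_on_def)
  then have "vless a c" using ab bc vless_trans by blast
  then show "(x, z) \<in> img f (rel t)" using ab bc by (auto simp: img_def rel_def)
qed

lemma good_irrefl: "good t e \<Longrightarrow> (x, x) \<notin> RR e"
  by (auto simp: good_def LL_def llless_irrefl)

lemma good_trans: "good t e \<Longrightarrow> trans (RR e)"
  by (auto simp: good_def bij_betw_def intro: img_rel_trans)


lemma Rg_mem1: "(0#a, 0#b) \<in> Rg t1 R1 R2 p \<longleftrightarrow> (a,b) \<in> R1"
proof -
  have "(0#a, 0#b) \<notin> map_prod emb2 emb2 ` R2" using emb2_ne' by auto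
  moreover have "(0#a, 0#b) \<notin> {(emb2 a, 0 # b) | a b. (a = p \<or> (a, p) \<in> R2) \<and> b \<in> verts t1}"
    using emb2_ne' by auto
  moreover have "(0#a, 0#b) \<in> map_prod (Cons 0) (Cons 0) ` R1 \<longleftrightarrow> (a,b) \<in> R1" by auto
  ultimately show ?thesis unfolding Rg_def Un_iff by argo
qed

lemma Rg_mem2: "(emb2 a, emb2 b) \<in> Rg t1 R1 R2 p \<longleftrightarrow> (a,b) \<in> R2"
proof -
  have "(emb2 a, emb2 b) \<notin> map_prod (Cons 0) (Cons 0) ` R1" using emb2_ne by auto
  moreover have "(emb2 a, emb2 b) \<notin> {(emb2 a, 0 # b) | a b. (a = p \<or> (a, p) \<in> R2) \<and> b \<in> verts t1}"
    using emb2_ne by auto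
  moreover have "(emb2 a, emb2 b) \<in> map_prod emb2 emb2 ` R2 \<longleftrightarrow> (a,b) \<in> R2"
    using emb2_inj by auto
  ultimately show ?thesis unfolding Rg_def Un_iff by argo
qed

lemma Rg_mem3: "(emb2 a, [0]) \<in> Rg t1 R1 R2 p \<longleftrightarrow> (a = p \<or> (a, p) \<in> R2)"
proof -
  have "(emb2 a, [0]) \<notin> map_prod (Cons 0) (Cons 0) ` R1" using emb2_ne by auto
  moreover have "(emb2 a, [0]) \<notin> map_prod emb2 emb2 ` R2" using emb2_ne' by auto
  moreover have "(emb2 a, [0]) \<in> {(emb2 a, 0 # b) | a b. (a = p \<or> (a, p) \<in> R2) \<and> b \<in> verts t1}
     \<longleftrightarrow> (a = p \<or> (a, p) \<in> R2)"
    using emb2_inj by (auto simp: verts_def)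
  ultimately show ?thesis unfolding Rg_def Un_iff by argo
qed

lemma Rg_R1: "{(a,b). (0#a, 0#b) \<in> Rg t1 R1 R2 p} = R1"
  using Rg_mem1 by blast

lemma Rg_R2: "{(a,b). (emb2 a, emb2 b) \<in> Rg t1 R1 R2 p} = R2"
  using Rg_mem2 by blast

lemma Rg_p: "{a. (emb2 a, [0]) \<in> Rg t1 R1 R2 p} = {a. a = p \<or> (a, p) \<in> R2}"
  using Rg_mem3 by blast

lemma E_inj: "inj_on RR (E t)"
proof (induction t rule: E.induct)
  case 1
  then show ?case by simp
next
  case (2 t1 ts)
  let ?D = "{(e1, e2, v). e1 \<in> E t1 \<and> e2 \<in> E (Node ts) \<and> v \<in> verts (rho e2)}"
  have key: "d = d'" if d: "d \<in> ?D" "d' \<in> ?D" and eq: "RR (mkE t1 d) = RR (mkE t1 d')" for d d'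
  proof -
    obtain e1 e2 v where dd0: "d = (e1,e2,v)" by (cases d)
    then have dd: "d = (e1,e2,v)" "e1 \<in> E t1" "e2 \<in> E (Node ts)" "v \<in> verts (rho e2)"
      using d(1) by auto
    obtain e1' e2' v' where dd0': "d' = (e1',e2',v')" by (cases d')
    then have dd': "d' = (e1',e2',v')" "e1' \<in> E t1" "e2' \<in> E (Node ts)" "v' \<in> verts (rho e2')"
      using d(2) by auto
    have eq': "Rg t1 (RR e1) (RR e2) (th e2 v) = Rg t1 (RR e1') (RR e2') (th e2' v')"
      using eq dd dd' by (simp add: mkE_simps)
    have "RR e1 = {(a,b). (0#a,0#b) \<in> Rg t1 (RR e1) (RR e2) (th e2 v)}" by (rule Rg_R1[symmetric])
    also have "\<dots> = {(a,b). (0#a,0#b) \<in> Rg t1 (RR e1') (RR e2') (th e2' v')}" by (simp only: eq')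
    also have "\<dots> = RR e1'" by (rule Rg_R1)
    finally have "RR e1 = RR e1'" .
    then have 1: "e1 = e1'" using inj_onD[OF 2(1)] dd(2) dd'(2) by blast
    have "RR e2 = {(a,b). (emb2 a, emb2 b) \<in> Rg t1 (RR e1) (RR e2) (th e2 v)}" by (rule Rg_R2[symmetric])
    also have "\<dots> = {(a,b). (emb2 a, emb2 b) \<in> Rg t1 (RR e1') (RR e2') (th e2' v')}" by (simp only: eq')
    also have "\<dots> = RR e2'" by (rule Rg_R2)
    finally have "RR e2 = RR e2'" .
    then have 2: "e2 = e2'" using inj_onD[OF 2(2)] dd(3) dd'(3) by blast
    have S: "{a. a = th e2 v \<or> (a, th e2 v) \<in> RR e2} = {a. a = th e2 v' \<or> (a, th e2 v') \<in> RR e2}"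
    proof -
      have "{a. a = th e2 v \<or> (a, th e2 v) \<in> RR e2} = {a. (emb2 a, [0]) \<in> Rg t1 (RR e1) (RR e2) (th e2 v)}"
        by (rule Rg_p[symmetric])
      also have "\<dots> = {a. (emb2 a, [0]) \<in> Rg t1 (RR e1') (RR e2') (th e2' v')}" by (simp only: eq')
      also have "\<dots> = {a. a = th e2' v' \<or> (a, th e2' v') \<in> RR e2'}" by (rule Rg_p)
      finally show ?thesis using 1 2 by simp
    qed
    have g: "good (Node ts) e2" by (rule E_good[OF dd(3)])
    have "th e2 v = th e2 v'"
    proof (rule ccontr)
      assume ne: "th e2 v \<noteq> th e2 v'"
      have "th e2 v \<in> {a. a = th e2 v \<or> (a, th e2 v) \<in> RR e2}" by simp
      then have "th e2 v \<in> {a. a = th e2 v' \<or> (a, th e2 v') \<in> RR e2}" by (simp only: S)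
      then have "(th e2 v, th e2 v') \<in> RR e2" using ne by simp
      have "th e2 v' \<in> {a. a = th e2 v' \<or> (a, th e2 v') \<in> RR e2}" by simp
      then have "th e2 v' \<in> {a. a = th e2 v \<or> (a, th e2 v) \<in> RR e2}" by (simp only: S)
      then have "(th e2 v', th e2 v) \<in> RR e2" using ne by simp
      with \<open>(th e2 v, th e2 v') \<in> RR e2\<close>
      have "(th e2 v, th e2 v) \<in> RR e2" by (rule transD[OF good_trans[OF g]])
      then show False using good_irrefl[OF g] by simp
    qed
    moreover have "inj_on (th e2) (verts (rho e2))" using g by (simp add: good_def bij_betw_def)
    ultimately have "v = v'" using dd(4) dd'(4) 2 by (metis inj_onD)
    then show ?thesis using dd(1) dd'(1) 1 2 by simp
  qed
  show ?case
  proof (rule inj_onI)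
    fix x y assume x: "x \<in> E (Node (t1#ts))" and y: "y \<in> E (Node (t1#ts))" and xy: "RR x = RR y"
    from x obtain d where d: "d \<in> ?D" "x = mkE t1 d" by (auto simp del: E.simps simp: E.simps(2))
    from y obtain d' where d': "d' \<in> ?D" "y = mkE t1 d'" by (auto simp del: E.simps simp: E.simps(2))
    show "x = y" using key[OF d(1) d'(1)] xy d d' by simp
  qed
qed


lemma mkE_RR_inj:
  assumes d: "d \<in> {(e1, e2, v). e1 \<in> E t1 \<and> e2 \<in> E (Node ts) \<and> v \<in> verts (rho e2)}"
     "d' \<in> {(e1, e2, v). e1 \<in> E t1 \<and> e2 \<in> E (Node ts) \<and> v \<in> verts (rho e2)}"
    and eq: "RR (mkE t1 d) = RR (mkE t1 d')"
  shows "d = d'"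
proof -
  obtain e1 e2 v where dd0: "d = (e1,e2,v)" by (cases d)
  then have dd: "d = (e1,e2,v)" "e1 \<in> E t1" "e2 \<in> E (Node ts)" "v \<in> verts (rho e2)"
    using d(1) by auto
  obtain e1' e2' v' where dd0': "d' = (e1',e2',v')" by (cases d')
  then have dd': "d' = (e1',e2',v')" "e1' \<in> E t1" "e2' \<in> E (Node ts)" "v' \<in> verts (rho e2')"
    using d(2) by auto
  have eq': "Rg t1 (RR e1) (RR e2) (th e2 v) = Rg t1 (RR e1') (RR e2') (th e2' v')"
    using eq dd dd' by (simp add: mkE_simps)
  have "RR e1 = {(a,b). (0#a,0#b) \<in> Rg t1 (RR e1) (RR e2) (th e2 v)}" by (rule Rg_R1[symmetric])
  also have "\<dots> = {(a,b). (0#a,0#b) \<in> Rg t1 (RR e1') (RR e2') (th e2' v')}" by (simp only: eq')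
  also have "\<dots> = RR e1'" by (rule Rg_R1)
  finally have "RR e1 = RR e1'" .
  then have 1: "e1 = e1'" using inj_onD[OF E_inj[of t1]] dd(2) dd'(2) by blast
  have "RR e2 = {(a,b). (emb2 a, emb2 b) \<in> Rg t1 (RR e1) (RR e2) (th e2 v)}" by (rule Rg_R2[symmetric])
  also have "\<dots> = {(a,b). (emb2 a, emb2 b) \<in> Rg t1 (RR e1') (RR e2') (th e2' v')}" by (simp only: eq')
  also have "\<dots> = RR e2'" by (rule Rg_R2)
  finally have "RR e2 = RR e2'" .
  then have 2: "e2 = e2'" using inj_onD[OF E_inj[of "Node ts"]] dd(3) dd'(3) by blast
  have S: "{a. a = th e2 v \<or> (a, th e2 v) \<in> RR e2} = {a. a = th e2 v' \<or> (a, th e2 v') \<in> RR e2}"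
  proof -
    have "{a. a = th e2 v \<or> (a, th e2 v) \<in> RR e2} = {a. (emb2 a, [0]) \<in> Rg t1 (RR e1) (RR e2) (th e2 v)}"
      by (rule Rg_p[symmetric])
    also have "\<dots> = {a. (emb2 a, [0]) \<in> Rg t1 (RR e1') (RR e2') (th e2' v')}" by (simp only: eq')
    also have "\<dots> = {a. a = th e2' v' \<or> (a, th e2' v') \<in> RR e2'}" by (rule Rg_p)
    finally show ?thesis using 1 2 by simp
  qed
  have g: "good (Node ts) e2" by (rule E_good[OF dd(3)])
  have "th e2 v = th e2 v'"
  proof (rule ccontr)
    assume ne: "th e2 v \<noteq> th e2 v'"
    have "th e2 v \<in> {a. a = th e2 v \<or> (a, th e2 v) \<in> RR e2}" by simp
    then have "th e2 v \<in> {a. a = th e2 v' \<or> (a, th e2 v') \<in> RR e2}" by (simp only: S)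
    then have "(th e2 v, th e2 v') \<in> RR e2" using ne by simp
    have "th e2 v' \<in> {a. a = th e2 v' \<or> (a, th e2 v') \<in> RR e2}" by simp
    then have "th e2 v' \<in> {a. a = th e2 v \<or> (a, th e2 v) \<in> RR e2}" by (simp only: S)
    then have "(th e2 v', th e2 v) \<in> RR e2" using ne by simp
    with \<open>(th e2 v, th e2 v') \<in> RR e2\<close>
    have "(th e2 v, th e2 v) \<in> RR e2" by (rule transD[OF good_trans[OF g]])
    then show False using good_irrefl[OF g] by simp
  qed
  moreover have "inj_on (th e2) (verts (rho e2))" using g by (simp add: good_def bij_betw_def)
  ultimately have "v = v'" using dd(4) dd'(4) 2 by (metis inj_onD)
  then show ?thesis using dd(1) dd'(1) 1 2 by simp
qed

definition Lprop :: "ptree \<Rightarrow> vrel \<Rightarrow> bool" where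
  "Lprop t R \<longleftrightarrow> trans R \<and> (\<forall>x y z. (x,z) \<in> R \<longrightarrow> (y,z) \<in> R \<longrightarrow> x = y \<or> (x,y) \<in> R \<or> (y,x) \<in> R)
     \<and> rel t \<subseteq> R \<and> R \<subseteq> LL t"

lemma finite_chain_max:
  assumes "finite P" "P \<noteq> {}" "\<forall>x\<in>P. \<forall>y\<in>P. x = y \<or> (x,y) \<in> R \<or> (y,x) \<in> R" "trans R"
  shows "\<exists>m\<in>P. \<forall>x\<in>P. x = m \<or> (x,m) \<in> R"
  using assms
proof (induction P rule: finite_ne_induct)
  case (singleton x)
  then show ?case by simp
next
  case (insert x F)
  then obtain m where m: "m \<in> F" "\<forall>y\<in>F. y = m \<or> (y,m) \<in> R" by auto
  show ?case
  proof (cases "(m, x) \<in> R")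
    case True
    have "\<forall>y\<in>insert x F. y = x \<or> (y,x) \<in> R"
      using m True insert.prems(2) by (metis insertE transD)
    then show ?thesis by blast
  next
    case False
    have "x \<noteq> m" using insert.hyps m by blast
    then have "(x, m) \<in> R" using insert.prems(1) m False by blast
    then have "\<forall>y\<in>insert x F. y = m \<or> (y,m) \<in> R" using m by blast
    then show ?thesis using m by blast
  qed
qed

lemma vt1: "0 # a \<in> verts (Node (t1 # ts)) \<longleftrightarrow> a \<in> verts t1"
  by (simp add: verts_def)

lemma vt2: "emb2 a \<in> verts (Node (t1 # ts)) \<longleftrightarrow> a \<in> verts (Node ts)"
  by (cases a) (simp_all add: verts_def)

lemma LL_sub: "(x, y) \<in> LL t \<Longrightarrow> x \<in> verts t \<and> y \<in> verts t \<and> llless t x y"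
  by (simp add: LL_def)

lemma E_complete: "Lprop t R \<Longrightarrow> \<exists>e\<in>E t. RR e = R"
proof (induction t arbitrary: R rule: E.induct)
  case 1
  have "LL (Node []) = {}" by (simp add: LL_def verts_Nil)
  then have "R = {}" using 1 by (simp add: Lprop_def)
  then show ?case by (simp add: RR_def)
next
  case (2 t1 ts)
  let ?\<tau> = "Node (t1 # ts)"
  have tr: "trans R" and ch: "\<And>x y z. (x,z) \<in> R \<Longrightarrow> (y,z) \<in> R \<Longrightarrow> x = y \<or> (x,y) \<in> R \<or> (y,x) \<in> R"
    and sr: "rel ?\<tau> \<subseteq> R" and sl: "R \<subseteq> LL ?\<tau>"
    using 2(3) unfolding Lprop_def by blast+
  define R1 where "R1 = {(a,b). (0#a, 0#b) \<in> R}"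
  define R2 where "R2 = {(a,b). (emb2 a, emb2 b) \<in> R}"
  have L1: "Lprop t1 R1"
    unfolding Lprop_def
  proof (intro conjI allI impI)
    show "trans R1" unfolding R1_def using tr by (auto simp: trans_def)
    show "x = y \<or> (x, y) \<in> R1 \<or> (y, x) \<in> R1" if "(x, z) \<in> R1" "(y, z) \<in> R1" for x y z
      using that ch unfolding R1_def by blast
    show "rel t1 \<subseteq> R1"
    proof
      fix z assume "z \<in> rel t1"
      then obtain a b where ab: "z = (a,b)" "a \<in> verts t1" "b \<in> verts t1" "vless a b" by (auto simp: rel_def)
      then have "(0#a, 0#b) \<in> rel ?\<tau>" by (simp add: rel_def vt1 vless_simps)
      then show "z \<in> R1" using sr ab unfolding R1_def by auto
    qed
    show "R1 \<subseteq> LL t1"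
    proof
      fix z assume "z \<in> R1"
      then obtain a b where ab: "z = (a,b)" "(0#a, 0#b) \<in> R" unfolding R1_def by auto
      then have "(0#a, 0#b) \<in> LL ?\<tau>" using sl by blast
      then show "z \<in> LL t1" using ab by (simp add: LL_def vt1 llless_simps del: llless.simps)
    qed
  qed
  have L2: "Lprop (Node ts) R2"
    unfolding Lprop_def
  proof (intro conjI allI impI)
    show "trans R2" unfolding R2_def using tr by (auto simp: trans_def)
    show "x = y \<or> (x, y) \<in> R2 \<or> (y, x) \<in> R2" if "(x, z) \<in> R2" "(y, z) \<in> R2" for x y z
      using that ch emb2_inj unfolding R2_def by blast
    show "rel (Node ts) \<subseteq> R2"
    proof
      fix z assume "z \<in> rel (Node ts)"
      then obtain a b where ab: "z = (a,b)" "a \<in> verts (Node ts)" "b \<in> verts (Node ts)" "vless a b"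
        by (auto simp: rel_def)
      then have "(emb2 a, emb2 b) \<in> rel ?\<tau>" by (simp add: rel_def vt2 vless_simps)
      then show "z \<in> R2" using sr ab unfolding R2_def by auto
    qed
    show "R2 \<subseteq> LL (Node ts)"
    proof
      fix z assume "z \<in> R2"
      then obtain a b where ab: "z = (a,b)" "(emb2 a, emb2 b) \<in> R" unfolding R2_def by auto
      then have "(emb2 a, emb2 b) \<in> LL ?\<tau>" using sl by blast
      then show "z \<in> LL (Node ts)" using ab by (simp add: LL_def vt2 llless_simps del: llless.simps)
    qed
  qed
  obtain e1 where e1: "e1 \<in> E t1" "RR e1 = R1" using 2(1) L1 by blast
  obtain e2 where e2: "e2 \<in> E (Node ts)" "RR e2 = R2" using 2(2) L2 by blast
  define P where "P = {x. (x, [0]) \<in> R}"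
  have Psub: "P \<subseteq> verts ?\<tau>" using sl unfolding P_def LL_def by auto
  have r0: "[0] \<in> verts ?\<tau>" by (simp add: verts_def)
  have "[] \<in> P"
  proof -
    have "([], [0]) \<in> rel ?\<tau>" using r0 by (simp add: rel_def verts_def vless_def)
    then show ?thesis using sr unfolding P_def by blast
  qed
  moreover have "finite P" using Psub finite_verts finite_subset by blast
  moreover have "\<forall>x\<in>P. \<forall>y\<in>P. x = y \<or> (x,y) \<in> R \<or> (y,x) \<in> R" using ch unfolding P_def by blast
  ultimately obtain m where m: "m \<in> P" "\<forall>x\<in>P. x = m \<or> (x,m) \<in> R"
    using finite_chain_max[OF _ _ _ tr] by blast
  have mR: "(m, [0]) \<in> R" using m unfolding P_def by simp
  then have mL: "m \<in> verts ?\<tau>" "llless ?\<tau> m [0]" using sl LL_sub by blast+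
  obtain p2 where p2: "m = emb2 p2" "p2 \<in> verts (Node ts)"
  proof -
    from mL(1) consider (l) q where "m = 0 # q" "q \<in> verts t1" | (r) q where "m = emb2 q" "q \<in> verts (Node ts)"
      using verts_Cons by blast
    then show thesis
    proof cases
      case l
      have "llless ?\<tau> (0#q) (0#[])" using mL l by simp
      then have "llless t1 q []" by (simp only: llless_simps)
      then show ?thesis using llless_root by blast
    next
      case r
      then show ?thesis using that by blast
    qed
  qed
  have g2: "good (Node ts) e2" using E_good e2 by blast
  then have "th e2 ` verts (rho e2) = verts (Node ts)" by (simp add: good_def bij_betw_def)
  then obtain v where v: "v \<in> verts (rho e2)" "th e2 v = p2" using p2 by (metis imageE)
  define e where "e = mkE t1 (e1, e2, v)"
  have eE: "e \<in> E ?\<tau>" unfolding e_def using e1 e2 v by auto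
  have RRe: "RR e = Rg t1 R1 R2 p2" unfolding e_def using e1 e2 v by (simp add: mkE_simps)
  have inP: "emb2 a \<in> P \<longleftrightarrow> a = p2 \<or> (a, p2) \<in> R2" for a
  proof
    assume "emb2 a \<in> P"
    then have "emb2 a = m \<or> (emb2 a, m) \<in> R" using m by blast
    then show "a = p2 \<or> (a, p2) \<in> R2" using p2 emb2_inj unfolding R2_def by auto
  next
    assume "a = p2 \<or> (a, p2) \<in> R2"
    then have "emb2 a = m \<or> (emb2 a, m) \<in> R" using p2 unfolding R2_def by auto
    then show "emb2 a \<in> P" using mR tr unfolding P_def by (auto dest: transD)
  qed
  have "Rg t1 R1 R2 p2 = R"
  proof (rule set_eqI)
    fix z
    show "z \<in> Rg t1 R1 R2 p2 \<longleftrightarrow> z \<in> R"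
    proof
      assume "z \<in> Rg t1 R1 R2 p2"
      then consider (A) a b where "z = (0#a, 0#b)" "(a,b) \<in> R1"
        | (B) a b where "z = (emb2 a, emb2 b)" "(a,b) \<in> R2"
        | (C) a b where "z = (emb2 a, 0 # b)" "a = p2 \<or> (a, p2) \<in> R2" "b \<in> verts t1"
        unfolding Rg_def by blast
      then show "z \<in> R"
      proof cases
        case A then show ?thesis unfolding R1_def by simp
      next
        case B then show ?thesis unfolding R2_def by simp
      next
        case C
        have a0: "(emb2 a, [0]) \<in> R" using inP C unfolding P_def by blast
        show ?thesis
        proof (cases "b = []")
          case True
          then show ?thesis using C a0 by simp
        next
          case False
          have "([0], 0#b) \<in> rel ?\<tau>" using C False r0 by (simp add: rel_def vt1 vless_def)
          then have "([0], 0#b) \<in> R" using sr by blast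
          then show ?thesis using C a0 tr by (auto dest: transD)
        qed
      qed
    next
      assume zR: "z \<in> R"
      obtain x y where zxy: "z = (x,y)" by (cases z)
      then have "(x,y) \<in> LL ?\<tau>" using zR sl by blast
      then have xy: "z = (x,y)" "x \<in> verts ?\<tau>" "y \<in> verts ?\<tau>" "llless ?\<tau> x y"
        using LL_sub zxy by blast+
      from xy(2) consider (l) a where "x = 0 # a" "a \<in> verts t1" | (r) a where "x = emb2 a" "a \<in> verts (Node ts)"
        using verts_Cons by blast
      then show "z \<in> Rg t1 R1 R2 p2"
      proof cases
        case l
        from xy(3) consider (l') b where "y = 0 # b" "b \<in> verts t1" | (r') b where "y = emb2 b" "b \<in> verts (Node ts)"
          using verts_Cons by blast
        then show ?thesis
        proof cases
          case l'
          then have "(a,b) \<in> R1" using zR xy l unfolding R1_def by simp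
          then show ?thesis using xy l l' Rg_mem1 by simp
        next
          case r'
          have "llless ?\<tau> (0#a) (emb2 b)" using xy l r' by simp
          then show ?thesis by (simp only: llless_simps)
        qed
      next
        case r
        from xy(3) consider (l') b where "y = 0 # b" "b \<in> verts t1" | (r') b where "y = emb2 b" "b \<in> verts (Node ts)"
          using verts_Cons by blast
        then show ?thesis
        proof cases
          case l'
          have xyR: "(emb2 a, 0#b) \<in> R" using zR xy r l' by simp
          have "emb2 a \<in> P"
          proof (cases "b = []")
            case True
            then show ?thesis using xyR unfolding P_def by simp
          next
            case False
            have "([0], 0#b) \<in> rel ?\<tau>" using l' False r0 by (simp add: rel_def vt1 vless_def)
            then have b0: "([0], 0#b) \<in> R" using sr by blast
            from ch[OF xyR b0] consider "emb2 a = [0]" | "(emb2 a, [0]) \<in> R" | "([0], emb2 a) \<in> R" by blast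
            then show ?thesis
            proof cases
              case 1 then show ?thesis using emb2_ne by metis
            next
              case 2 then show ?thesis unfolding P_def by simp
            next
              case 3
              then have "llless ?\<tau> (0#[]) (emb2 a)" using sl LL_sub by blast
              then show ?thesis by (simp only: llless_simps)
            qed
          qed
          then have "a = p2 \<or> (a, p2) \<in> R2" using inP by blast
          then have "(emb2 a, 0#b) \<in> Rg t1 R1 R2 p2" using l' unfolding Rg_def by blast
          then show ?thesis using xy r l' by simp
        next
          case r'
          then have "(a,b) \<in> R2" using zR xy r unfolding R2_def by simp
          then show ?thesis using xy r r' Rg_mem2 by simp
        qed
      qed
    qed
  qed
  then show ?case using eE RRe by blast
qed


section \<open>Isomorphisms\<close>

definition Iso :: "ptree \<Rightarrow> ptree \<Rightarrow> (vertex \<Rightarrow> vertex) set" where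
  "Iso \<sigma> \<rho> = {\<psi> \<in> verts \<sigma> \<rightarrow>\<^sub>E verts \<rho>. bij_betw \<psi> (verts \<sigma>) (verts \<rho>) \<and>
      (\<forall>a\<in>verts \<sigma>. \<forall>b\<in>verts \<sigma>. vless a b \<longleftrightarrow> vless (\<psi> a) (\<psi> b))}"

lemma finite_rel: "finite (rel t)"
proof -
  have "rel t \<subseteq> verts t \<times> verts t" by (auto simp: rel_def)
  then show ?thesis using finite_verts finite_subset by blast
qed

lemma sym_factor_Iso: "sym_factor \<sigma> = card (Iso \<sigma> \<sigma>)"
proof -
  have "{f \<in> verts \<sigma> \<rightarrow>\<^sub>E verts \<sigma>. bij_betw f (verts \<sigma>) (verts \<sigma>) \<and>
       (\<forall>v\<in>verts \<sigma>. \<forall>w\<in>verts \<sigma>. vless v w \<longrightarrow> vless (f v) (f w))} = Iso \<sigma> \<sigma>"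
  proof (rule set_eqI, rule iffI)
    fix f assume "f \<in> {f \<in> verts \<sigma> \<rightarrow>\<^sub>E verts \<sigma>. bij_betw f (verts \<sigma>) (verts \<sigma>) \<and>
       (\<forall>v\<in>verts \<sigma>. \<forall>w\<in>verts \<sigma>. vless v w \<longrightarrow> vless (f v) (f w))}"
    then have f: "f \<in> verts \<sigma> \<rightarrow>\<^sub>E verts \<sigma>" "bij_betw f (verts \<sigma>) (verts \<sigma>)"
      "\<And>v w. v \<in> verts \<sigma> \<Longrightarrow> w \<in> verts \<sigma> \<Longrightarrow> vless v w \<Longrightarrow> vless (f v) (f w)" by auto
    have inj: "inj_on f (verts \<sigma>)" and fim: "f ` verts \<sigma> = verts \<sigma>" using f(2) by (auto simp: bij_betw_def)
    have sub: "map_prod f f ` rel \<sigma> \<subseteq> rel \<sigma>"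
    proof
      fix z assume "z \<in> map_prod f f ` rel \<sigma>"
      then obtain a b where "z = (f a, f b)" "a \<in> verts \<sigma>" "b \<in> verts \<sigma>" "vless a b" by (auto simp: rel_def)
      then show "z \<in> rel \<sigma>" using f(3) fim by (auto simp: rel_def)
    qed
    have injp: "inj_on (map_prod f f) (rel \<sigma>)"
      using inj by (auto simp: inj_on_def rel_def)
    have eqr: "map_prod f f ` rel \<sigma> = rel \<sigma>" using endo_inj_surj[OF finite_rel sub injp] .
    have conv: "vless a b" if "a \<in> verts \<sigma>" "b \<in> verts \<sigma>" "vless (f a) (f b)" for a b
    proof -
      have "(f a, f b) \<in> rel \<sigma>" using that fim by (auto simp: rel_def)
      then obtain a' b' where "(a',b') \<in> rel \<sigma>" "f a = f a'" "f b = f b'" using eqr by force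
      then show ?thesis using inj that by (auto simp: rel_def inj_on_def)
    qed
    show "f \<in> Iso \<sigma> \<sigma>" unfolding Iso_def using f conv by blast
  next
    fix f assume "f \<in> Iso \<sigma> \<sigma>"
    then show "f \<in> {f \<in> verts \<sigma> \<rightarrow>\<^sub>E verts \<sigma>. bij_betw f (verts \<sigma>) (verts \<sigma>) \<and>
       (\<forall>v\<in>verts \<sigma>. \<forall>w\<in>verts \<sigma>. vless v w \<longrightarrow> vless (f v) (f w))}" unfolding Iso_def by blast
  qed
  then show ?thesis unfolding sym_factor_def by simp
qed

lemma Iso_comp:
  assumes "\<psi> \<in> Iso \<sigma> \<rho>" "\<chi> \<in> Iso \<rho> \<kappa>"
  shows "restrict (\<chi> \<circ> \<psi>) (verts \<sigma>) \<in> Iso \<sigma> \<kappa>"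
proof -
  have p: "bij_betw \<psi> (verts \<sigma>) (verts \<rho>)" "\<And>a b. a \<in> verts \<sigma> \<Longrightarrow> b \<in> verts \<sigma> \<Longrightarrow> vless a b \<longleftrightarrow> vless (\<psi> a) (\<psi> b)"
    using assms(1) unfolding Iso_def by auto
  have c: "bij_betw \<chi> (verts \<rho>) (verts \<kappa>)" "\<And>a b. a \<in> verts \<rho> \<Longrightarrow> b \<in> verts \<rho> \<Longrightarrow> vless a b \<longleftrightarrow> vless (\<chi> a) (\<chi> b)"
    using assms(2) unfolding Iso_def by auto
  have b: "bij_betw (\<chi> \<circ> \<psi>) (verts \<sigma>) (verts \<kappa>)" using bij_betw_trans[OF p(1) c(1)] .
  then have b': "bij_betw (restrict (\<chi> \<circ> \<psi>) (verts \<sigma>)) (verts \<sigma>) (verts \<kappa>)"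
    by (rule bij_betw_cong[THEN iffD1, rotated]) simp
  have m: "\<psi> a \<in> verts \<rho>" if "a \<in> verts \<sigma>" for a using p(1) that by (auto simp: bij_betw_def)
  show ?thesis unfolding Iso_def
    using b' p(2) c(2) m by (auto simp: bij_betw_def)
qed

lemma Iso_inv:
  assumes "\<psi> \<in> Iso \<sigma> \<rho>"
  shows "restrict (inv_into (verts \<sigma>) \<psi>) (verts \<rho>) \<in> Iso \<rho> \<sigma>"
proof -
  have p: "bij_betw \<psi> (verts \<sigma>) (verts \<rho>)" "\<And>a b. a \<in> verts \<sigma> \<Longrightarrow> b \<in> verts \<sigma> \<Longrightarrow> vless a b \<longleftrightarrow> vless (\<psi> a) (\<psi> b)"
    using assms(1) unfolding Iso_def by auto
  have b: "bij_betw (inv_into (verts \<sigma>) \<psi>) (verts \<rho>) (verts \<sigma>)" using bij_betw_inv_into[OF p(1)] .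
  then have b': "bij_betw (restrict (inv_into (verts \<sigma>) \<psi>) (verts \<rho>)) (verts \<rho>) (verts \<sigma>)"
    by (rule bij_betw_cong[THEN iffD1, rotated]) simp
  have m: "inv_into (verts \<sigma>) \<psi> a \<in> verts \<sigma>" "\<psi> (inv_into (verts \<sigma>) \<psi> a) = a" if "a \<in> verts \<rho>" for a
    using p(1) that by (auto simp: bij_betw_def inv_into_into f_inv_into_f)
  have "vless a b \<longleftrightarrow> vless (inv_into (verts \<sigma>) \<psi> a) (inv_into (verts \<sigma>) \<psi> b)"
    if "a \<in> verts \<rho>" "b \<in> verts \<rho>" for a b
    using p(2)[OF m(1)[OF that(1)] m(1)[OF that(2)]] m that by simp
  then show ?thesis unfolding Iso_def
    using b' by (auto simp: bij_betw_def)
qed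

lemma Iso_card:
  assumes "\<psi>0 \<in> Iso \<sigma> \<rho>"
  shows "card (Iso \<sigma> \<rho>) = card (Iso \<sigma> \<sigma>)"
proof -
  define \<psi>i where "\<psi>i = restrict (inv_into (verts \<sigma>) \<psi>0) (verts \<rho>)"
  have i: "\<psi>i \<in> Iso \<rho> \<sigma>" unfolding \<psi>i_def using Iso_inv[OF assms] .
  have m0: "\<psi>0 a \<in> verts \<rho>" "\<psi>i (\<psi>0 a) = a" if "a \<in> verts \<sigma>" for a
    using assms that unfolding Iso_def \<psi>i_def bij_betw_def by (auto simp: inv_into_f_f)
  have mi: "\<psi>i a \<in> verts \<sigma>" "\<psi>0 (\<psi>i a) = a" if "a \<in> verts \<rho>" for a
    using assms that unfolding Iso_def \<psi>i_def bij_betw_def by (auto simp: inv_into_into f_inv_into_f)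
  have ext: "\<psi> \<in> extensional (verts \<sigma>)" if "\<psi> \<in> Iso \<sigma> \<kappa>" for \<psi> \<kappa>
    using that unfolding Iso_def by (auto simp: PiE_def)
  have into: "\<psi> a \<in> verts \<kappa>" if "\<psi> \<in> Iso \<sigma> \<kappa>" "a \<in> verts \<sigma>" for \<psi> \<kappa> a
    using that unfolding Iso_def by auto
  have "bij_betw (\<lambda>\<psi>. restrict (\<psi>i \<circ> \<psi>) (verts \<sigma>)) (Iso \<sigma> \<rho>) (Iso \<sigma> \<sigma>)"
  proof (rule bij_betw_byWitness[where f' = "\<lambda>g. restrict (\<psi>0 \<circ> g) (verts \<sigma>)"])
    show "\<forall>a\<in>Iso \<sigma> \<rho>. restrict (\<psi>0 \<circ> restrict (\<psi>i \<circ> a) (verts \<sigma>)) (verts \<sigma>) = a"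
    proof
      fix a assume a: "a \<in> Iso \<sigma> \<rho>"
      show "restrict (\<psi>0 \<circ> restrict (\<psi>i \<circ> a) (verts \<sigma>)) (verts \<sigma>) = a"
      proof (rule HOL.ext)
        fix x show "restrict (\<psi>0 \<circ> restrict (\<psi>i \<circ> a) (verts \<sigma>)) (verts \<sigma>) x = a x"
          using ext[OF a] into[OF a] mi by (auto simp: extensional_def)
      qed
    qed
    show "\<forall>a'\<in>Iso \<sigma> \<sigma>. restrict (\<psi>i \<circ> restrict (\<psi>0 \<circ> a') (verts \<sigma>)) (verts \<sigma>) = a'"
    proof
      fix a assume a: "a \<in> Iso \<sigma> \<sigma>"
      show "restrict (\<psi>i \<circ> restrict (\<psi>0 \<circ> a) (verts \<sigma>)) (verts \<sigma>) = a"
      proof (rule HOL.ext)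
        fix x show "restrict (\<psi>i \<circ> restrict (\<psi>0 \<circ> a) (verts \<sigma>)) (verts \<sigma>) x = a x"
          using ext[OF a] into[OF a] m0 by (auto simp: extensional_def)
      qed
    qed
    show "(\<lambda>\<psi>. restrict (\<psi>i \<circ> \<psi>) (verts \<sigma>)) ` Iso \<sigma> \<rho> \<subseteq> Iso \<sigma> \<sigma>"
      using Iso_comp[OF _ i] by blast
    show "(\<lambda>g. restrict (\<psi>0 \<circ> g) (verts \<sigma>)) ` Iso \<sigma> \<sigma> \<subseteq> Iso \<sigma> \<rho>"
      using Iso_comp[OF _ assms] by blast
  qed
  then show ?thesis by (rule bij_betw_same_card)
qed


lemma vless_Nil2: "\<not> vless x []"
  by (simp add: vless_def)

lemma vless_Nil1: "vless [] x \<longleftrightarrow> x \<noteq> []"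
  by (auto simp: vless_def)

lemma vless_Cons_Cons: "vless (i#a) (j#b) \<longleftrightarrow> i = j \<and> vless a b"
  by (auto simp: vless_def)

lemma Nil_verts: "[] \<in> verts t"
  by (simp add: verts_def)

lemma Cons_verts: "j # q \<in> verts (Node ts) \<longleftrightarrow> j < length ts \<and> q \<in> verts (ts!j)"
  by (simp add: verts_def)

lemma mset_bij_eq:
  assumes "bij_betw f {..<n} {..<m}" "\<And>j. j < n \<Longrightarrow> g (f j) = h j"
  shows "mset (map h [0..<n]) = mset (map g [0..<m])"
proof -
  have "mset (map g [0..<m]) = image_mset g (mset_set {..<m})" by (simp add: atLeast0LessThan)
  also have "mset_set {..<m} = image_mset f (mset_set {..<n})"
    using assms(1) image_mset_mset_set[of f "{..<n}"] by (simp add: bij_betw_def)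
  also have "image_mset g (image_mset f (mset_set {..<n})) = image_mset h (mset_set {..<n})"
    by (simp add: image_mset.compositionality) (rule image_mset_cong, simp add: assms(2))
  also have "\<dots> = mset (map h [0..<n])" by (simp add: atLeast0LessThan)
  finally show ?thesis by simp
qed

lemma Iso_pi: "\<psi> \<in> Iso \<sigma> \<rho> \<Longrightarrow> pi_tree \<sigma> = pi_tree \<rho>"
proof (induction \<sigma> arbitrary: \<rho> \<psi>)
  case (Node ts)
  obtain us where \<rho>: "\<rho> = Node us" by (cases \<rho>)
  let ?\<sigma> = "Node ts"
  have bij: "bij_betw \<psi> (verts ?\<sigma>) (verts \<rho>)"
    and vl: "\<And>a b. a \<in> verts ?\<sigma> \<Longrightarrow> b \<in> verts ?\<sigma> \<Longrightarrow> vless a b \<longleftrightarrow> vless (\<psi> a) (\<psi> b)"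
    using Node.prems unfolding Iso_def by auto
  have inj: "inj_on \<psi> (verts ?\<sigma>)" and im: "\<psi> ` verts ?\<sigma> = verts \<rho>" using bij by (auto simp: bij_betw_def)
  have into: "\<psi> a \<in> verts \<rho>" if "a \<in> verts ?\<sigma>" for a using im that by blast
  have pre: "\<exists>a\<in>verts ?\<sigma>. \<psi> a = w" if "w \<in> verts \<rho>" for w
  proof -
    have "w \<in> \<psi> ` verts ?\<sigma>" using im that by simp
    then show ?thesis by blast
  qed
  have root: "\<psi> [] = []"
  proof (rule ccontr)
    assume ne: "\<psi> [] \<noteq> []"
    obtain a where a: "a \<in> verts ?\<sigma>" "\<psi> a = []" using pre[OF Nil_verts] by blast
    have "vless (\<psi> a) (\<psi> [])" using a ne vless_Nil1 by simp
    then have "vless a []" using vl[OF a(1) Nil_verts] by blast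
    then show False using vless_Nil2 by blast
  qed
  have nonroot: "\<psi> a \<noteq> []" if "a \<in> verts ?\<sigma>" "a \<noteq> []" for a
    using inj that root Nil_verts by (metis inj_onD)
  define f where "f j = hd (\<psi> [j])" for j
  have child: "\<psi> [j] = [f j] \<and> f j < length us" if j: "j < length ts" for j
  proof -
    have jv: "[j] \<in> verts ?\<sigma>" using j by (simp add: Cons_verts Nil_verts)
    obtain i r where ir: "\<psi> [j] = i # r" using nonroot[OF jv] by (cases "\<psi> [j]") auto
    have r: "r = []"
    proof (rule ccontr)
      assume "r \<noteq> []"
      have iv: "[i] \<in> verts \<rho>" using into[OF jv] ir is_vert_prefix unfolding verts_def
        by (metis Cons_prefix_Cons Nil_prefix mem_Collect_eq)
      obtain a where a: "a \<in> verts ?\<sigma>" "\<psi> a = [i]" using pre[OF iv] by blast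
      have "vless (\<psi> a) (\<psi> [j])" using a ir \<open>r \<noteq> []\<close> by (simp add: vless_Cons_Cons vless_Nil1)
      then have "vless a [j]" using vl[OF a(1) jv] by blast
      then have "a = []" by (cases a) (auto simp: vless_Cons_Cons vless_Nil2)
      then show False using a root by simp
    qed
    have "[i] \<in> verts \<rho>" using into[OF jv] ir r by simp
    then show ?thesis using ir r \<rho> by (simp add: f_def Cons_verts)
  qed
  have desc: "\<exists>r. \<psi> (j#q) = f j # r" if "j < length ts" "q \<in> verts (ts!j)" for j q
  proof (cases "q = []")
    case True then show ?thesis using child that by simp
  next
    case False
    have jv: "[j] \<in> verts ?\<sigma>" "j#q \<in> verts ?\<sigma>" using that by (simp_all add: Cons_verts Nil_verts)
    have "vless [j] (j#q)" using False by (simp add: vless_Cons_Cons vless_Nil1)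
    then have "vless (\<psi> [j]) (\<psi> (j#q))" using vl[OF jv] by blast
    then have "vless [f j] (\<psi> (j#q))" using child that by simp
    then show ?thesis by (cases "\<psi> (j#q)") (auto simp: vless_def)
  qed
  have finj: "inj_on f {..<length ts}"
  proof (rule inj_onI)
    fix j j' assume "j \<in> {..<length ts}" "j' \<in> {..<length ts}" "f j = f j'"
    then have "\<psi> [j] = \<psi> [j']" "[j] \<in> verts ?\<sigma>" "[j'] \<in> verts ?\<sigma>" using child
      by (auto simp: Cons_verts Nil_verts)
    then show "j = j'" using inj by (auto dest: inj_onD)
  qed
  have fbij: "bij_betw f {..<length ts} {..<length us}"
  proof (rule bij_betw_imageI[OF finj])
    show "f ` {..<length ts} = {..<length us}"
    proof
      show "f ` {..<length ts} \<subseteq> {..<length us}" using child by auto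
      show "{..<length us} \<subseteq> f ` {..<length ts}"
      proof
        fix i assume "i \<in> {..<length us}"
        then have iv: "[i] \<in> verts \<rho>" using \<rho> by (simp add: Cons_verts Nil_verts)
        obtain a where a: "a \<in> verts ?\<sigma>" "\<psi> a = [i]" using pre[OF iv] by blast
        obtain j q where jq: "a = j # q" using a root by (cases a) auto
        have jl: "j < length ts" "q \<in> verts (ts!j)" using a jq by (simp_all add: Cons_verts)
        obtain r where "\<psi> (j#q) = f j # r" using desc[OF jl] by blast
        then have "f j = i" using a jq by simp
        then show "i \<in> f ` {..<length ts}" using jl by blast
      qed
    qed
  qed
  have sub: "pi_tree (ts!j) = pi_tree (us!(f j))" if j: "j < length ts" for j
  proof -
    define \<psi>j where "\<psi>j = restrict (\<lambda>q. tl (\<psi> (j#q))) (verts (ts!j))"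
    have dj: "\<psi> (j#q) = f j # \<psi>j q" if "q \<in> verts (ts!j)" for q
      using desc[OF j that] that unfolding \<psi>j_def by auto
    have vj: "j#q \<in> verts ?\<sigma>" if "q \<in> verts (ts!j)" for q using j that by (simp add: Cons_verts)
    have "\<psi>j \<in> Iso (ts!j) (us!(f j))"
      unfolding Iso_def
    proof (intro CollectI conjI ballI)
      have intoj: "\<psi>j q \<in> verts (us!(f j))" if "q \<in> verts (ts!j)" for q
        using into[OF vj[OF that]] dj[OF that] \<rho> by (simp add: Cons_verts)
      show "\<psi>j \<in> verts (ts!j) \<rightarrow>\<^sub>E verts (us!(f j))" using intoj unfolding \<psi>j_def by auto
      show "bij_betw \<psi>j (verts (ts!j)) (verts (us!(f j)))"
      proof (rule bij_betw_imageI)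
        show "inj_on \<psi>j (verts (ts!j))"
        proof (rule inj_onI)
          fix q q' assume q: "q \<in> verts (ts!j)" "q' \<in> verts (ts!j)" "\<psi>j q = \<psi>j q'"
          then have "\<psi> (j#q) = \<psi> (j#q')" using dj by simp
          then show "q = q'" using inj vj q by (auto dest: inj_onD)
        qed
        show "\<psi>j ` verts (ts!j) = verts (us!(f j))"
        proof
          show "\<psi>j ` verts (ts!j) \<subseteq> verts (us!(f j))" using intoj by auto
          show "verts (us!(f j)) \<subseteq> \<psi>j ` verts (ts!j)"
          proof
            fix q' assume q': "q' \<in> verts (us!(f j))"
            have "f j # q' \<in> verts \<rho>" using q' child[OF j] \<rho> by (simp add: Cons_verts)
            then obtain a where a: "a \<in> verts ?\<sigma>" "\<psi> a = f j # q'" using pre by blast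
            obtain j' q where jq: "a = j' # q" using a root by (cases a) auto
            have jl: "j' < length ts" "q \<in> verts (ts!j')" using a jq by (simp_all add: Cons_verts)
            obtain r where "\<psi> (j'#q) = f j' # r" using desc[OF jl] by blast
            then have "f j' = f j" using a jq by simp
            then have "j' = j" using finj jl j by (auto dest: inj_onD)
            then show "q' \<in> \<psi>j ` verts (ts!j)" using dj jl a jq by auto
          qed
        qed
      qed
      fix a b assume ab: "a \<in> verts (ts!j)" "b \<in> verts (ts!j)"
      have "vless a b \<longleftrightarrow> vless (j#a) (j#b)" by (simp add: vless_Cons_Cons)
      also have "\<dots> \<longleftrightarrow> vless (\<psi> (j#a)) (\<psi> (j#b))" using vl vj ab by blast
      also have "\<dots> \<longleftrightarrow> vless (\<psi>j a) (\<psi>j b)" using dj ab by (simp add: vless_Cons_Cons)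
      finally show "vless a b \<longleftrightarrow> vless (\<psi>j a) (\<psi>j b)" .
    qed
    then show ?thesis using Node.IH j by simp
  qed
  have "mset (map (\<lambda>j. pi_tree (ts!j)) [0..<length ts]) = mset (map (\<lambda>i. pi_tree (us!i)) [0..<length us])"
    using mset_bij_eq[OF fbij, of "\<lambda>i. pi_tree (us!i)" "\<lambda>j. pi_tree (ts!j)"] sub by simp
  moreover have "map (\<lambda>j. pi_tree (ts!j)) [0..<length ts] = map pi_tree ts" by (rule nth_equalityI) auto
  moreover have "map (\<lambda>i. pi_tree (us!i)) [0..<length us] = map pi_tree us" by (rule nth_equalityI) auto
  ultimately show ?case using \<rho> by simp
qed


lemma pi_Iso: "pi_tree \<sigma> = pi_tree \<rho> \<Longrightarrow> \<exists>\<psi>. \<psi> \<in> Iso \<sigma> \<rho>"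
proof (induction \<sigma> arbitrary: \<rho>)
  case (Node ts)
  obtain us where \<rho>: "\<rho> = Node us" by (cases \<rho>)
  let ?\<sigma> = "Node ts"
  have "mset (map pi_tree ts) = mset (map pi_tree us)" using Node.prems \<rho> by simp
  from permutation_Ex_bij[OF this] obtain f where
    f0: "bij_betw f {..<length (map pi_tree ts)} {..<length (map pi_tree us)}"
    "\<forall>i<length (map pi_tree ts). map pi_tree ts ! i = map pi_tree us ! f i" by blast
  have f: "bij_betw f {..<length ts} {..<length us}" using f0(1) by simp
  have fin0: "f i < length us" if "i < length ts" for i using f that by (auto simp: bij_betw_def)
  have f2: "pi_tree (ts!i) = pi_tree (us!(f i))" if "i < length ts" for i
    using f0(2) that fin0[OF that] by simp
  note f = f f2
  have fin: "f j < length us" if "j < length ts" for j using f(1) that by (auto simp: bij_betw_def)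
  have finj: "inj_on f {..<length ts}" using f(1) by (simp add: bij_betw_def)
  have fsurj: "\<exists>j<length ts. f j = i" if "i < length us" for i
  proof -
    have "i \<in> f ` {..<length ts}" using f(1) that by (simp add: bij_betw_def)
    then show ?thesis by auto
  qed
  define \<Psi> where "\<Psi> j = (SOME \<psi>. \<psi> \<in> Iso (ts!j) (us!(f j)))" for j
  have \<Psi>: "\<Psi> j \<in> Iso (ts!j) (us!(f j))" if "j < length ts" for j
  proof -
    have "\<exists>\<psi>. \<psi> \<in> Iso (ts!j) (us!(f j))" using Node.IH[of "ts!j" "us!(f j)"] f(2) that by simp
    then show ?thesis unfolding \<Psi>_def by (rule someI_ex)
  qed
  have \<Psi>b: "bij_betw (\<Psi> j) (verts (ts!j)) (verts (us!(f j)))"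
    and \<Psi>v: "\<And>a b. a \<in> verts (ts!j) \<Longrightarrow> b \<in> verts (ts!j) \<Longrightarrow> vless a b \<longleftrightarrow> vless (\<Psi> j a) (\<Psi> j b)"
    if "j < length ts" for j using \<Psi>[OF that] unfolding Iso_def by auto
  define g where "g x = (case x of [] \<Rightarrow> [] | j # q \<Rightarrow> f j # \<Psi> j q)" for x
  define \<psi> where "\<psi> = restrict g (verts ?\<sigma>)"
  have g_into: "g x \<in> verts \<rho>" if "x \<in> verts ?\<sigma>" for x
  proof (cases x)
    case Nil then show ?thesis by (simp add: g_def Nil_verts)
  next
    case (Cons j q)
    then have "j < length ts" "q \<in> verts (ts!j)" using that by (simp_all add: Cons_verts)
    then show ?thesis using Cons \<Psi>b fin \<rho> by (auto simp: g_def Cons_verts bij_betw_def)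
  qed
  have g_inj: "inj_on g (verts ?\<sigma>)"
  proof (rule inj_onI)
    fix x y assume x: "x \<in> verts ?\<sigma>" and y: "y \<in> verts ?\<sigma>" and eq: "g x = g y"
    show "x = y"
    proof (cases x; cases y)
      fix j q j' q' assume c: "x = j # q" "y = j' # q'"
      have jq: "j < length ts" "q \<in> verts (ts!j)" "j' < length ts" "q' \<in> verts (ts!j')"
        using x y c by (simp_all add: Cons_verts)
      have "f j = f j'" "\<Psi> j q = \<Psi> j' q'" using eq c by (simp_all add: g_def)
      then have "j = j'" using finj jq by (auto dest: inj_onD)
      then have "q = q'" using \<Psi>b[OF jq(1)] jq \<open>\<Psi> j q = \<Psi> j' q'\<close> by (auto simp: bij_betw_def dest: inj_onD)
      then show ?thesis using c \<open>j = j'\<close> by simp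
    qed (use eq in \<open>auto simp: g_def\<close>)
  qed
  have g_surj: "verts \<rho> \<subseteq> g ` verts ?\<sigma>"
  proof
    fix w assume w: "w \<in> verts \<rho>"
    show "w \<in> g ` verts ?\<sigma>"
    proof (cases w)
      case Nil
      then show ?thesis using Nil_verts by (force simp: g_def)
    next
      case (Cons i q')
      then have iq: "i < length us" "q' \<in> verts (us!i)" using w \<rho> by (simp_all add: Cons_verts)
      obtain j where j: "j < length ts" "f j = i" using fsurj[OF iq(1)] by blast
      have "q' \<in> \<Psi> j ` verts (ts!j)" using \<Psi>b[OF j(1)] iq j by (auto simp: bij_betw_def)
      then obtain q where q: "q \<in> verts (ts!j)" "\<Psi> j q = q'" by blast
      have "j # q \<in> verts ?\<sigma>" using j q by (simp add: Cons_verts)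
      moreover have "g (j # q) = w" using Cons j q by (simp add: g_def)
      ultimately show ?thesis by blast
    qed
  qed
  have g_vless: "vless a b \<longleftrightarrow> vless (g a) (g b)" if a: "a \<in> verts ?\<sigma>" and b: "b \<in> verts ?\<sigma>" for a b
  proof (cases a; cases b)
    fix j q j' q' assume c: "a = j # q" "b = j' # q'"
    have jq: "j < length ts" "q \<in> verts (ts!j)" "j' < length ts" "q' \<in> verts (ts!j')"
      using a b c by (simp_all add: Cons_verts)
    show ?thesis
    proof (cases "j = j'")
      case True
      then show ?thesis using c jq \<Psi>v[OF jq(1)] by (simp add: g_def vless_Cons_Cons)
    next
      case False
      then have "f j \<noteq> f j'" using finj jq by (auto dest: inj_onD)
      then show ?thesis using c False by (simp add: g_def vless_Cons_Cons)
    qed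
  qed (auto simp: g_def vless_Nil1 vless_Nil2)
  have "\<psi> \<in> Iso ?\<sigma> \<rho>"
    unfolding Iso_def
  proof (intro CollectI conjI ballI)
    show "\<psi> \<in> verts ?\<sigma> \<rightarrow>\<^sub>E verts \<rho>" unfolding \<psi>_def using g_into by auto
    have "bij_betw g (verts ?\<sigma>) (verts \<rho>)"
      using g_inj g_into g_surj by (auto simp: bij_betw_def)
    then show "bij_betw \<psi> (verts ?\<sigma>) (verts \<rho>)"
      unfolding \<psi>_def by (rule bij_betw_cong[THEN iffD1, rotated]) simp
    fix a b assume "a \<in> verts ?\<sigma>" "b \<in> verts ?\<sigma>"
    then show "vless a b \<longleftrightarrow> vless (\<psi> a) (\<psi> b)" unfolding \<psi>_def using g_vless by simp
  qed
  then show ?case by blast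
qed


section \<open>Psi via entries\<close>

lemma E_Cons_Sigma: "E (Node (t1 # ts)) = mkE t1 ` Sigma (E t1) (\<lambda>_. Sigma (E (Node ts)) (\<lambda>e2. verts (rho e2)))"
proof -
  have "{(e1, e2, v). e1 \<in> E t1 \<and> e2 \<in> E (Node ts) \<and> v \<in> verts (rho e2)} =
        Sigma (E t1) (\<lambda>_. Sigma (E (Node ts)) (\<lambda>e2. verts (rho e2)))" by auto
  then show ?thesis by simp
qed

lemma lgraft_basis_sum: "lgraft_basis s t = (\<Sum>v\<in>verts t. frag_of (graft_at s v t))"
  by (simp add: lgraft_basis_def)

lemma Psi_basis_E: "Psi_basis t = (\<Sum>e\<in>E t. frag_of (rho e))"
proof (induction t rule: E.induct)
  case 1
  then show ?case by (simp add: rho_def)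
next
  case (2 t1 ts)
  let ?D = "Sigma (E t1) (\<lambda>_. Sigma (E (Node ts)) (\<lambda>e2. verts (rho e2)))"
  have fin1: "finite (E t1)" and fin2: "finite (E (Node ts))" by (simp_all add: E_finite)
  have "Psi_basis (Node (t1 # ts)) = lgraft (Psi_basis t1) (Psi_basis (Node ts))" by simp
  also have "\<dots> = (\<Sum>e1\<in>E t1. \<Sum>e2\<in>E (Node ts). lgraft_basis (rho e1) (rho e2))"
    unfolding 2 lgraft_def using fin1 fin2 by (simp add: frag_extend_sum comp_def)
  also have "\<dots> = (\<Sum>e1\<in>E t1. \<Sum>e2\<in>E (Node ts). \<Sum>v\<in>verts (rho e2). frag_of (rho (mkE t1 (e1, e2, v))))"
    by (simp add: lgraft_basis_def mkE_simps)
  also have "\<dots> = (\<Sum>d\<in>?D. frag_of (rho (mkE t1 d)))"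
    using fin1 fin2 finite_verts by (simp add: sum.Sigma)
  also have "\<dots> = (\<Sum>e\<in>mkE t1 ` ?D. frag_of (rho e))"
  proof -
    have "inj_on (mkE t1) ?D"
    proof (rule inj_onI)
      fix d d' assume "d \<in> ?D" "d' \<in> ?D" "mkE t1 d = mkE t1 d'"
      then show "d = d'" using mkE_RR_inj[of d t1 ts d'] by auto
    qed
    then show ?thesis by (simp add: sum.reindex)
  qed
  also have "\<dots> = (\<Sum>e\<in>E (Node (t1 # ts)). frag_of (rho e))" by (simp only: E_Cons_Sigma)
  finally show ?case .
qed

lemma lookup_Psibar: "Poly_Mapping.lookup (Psibar (frag_of \<tau>)) s = int (card {e \<in> E \<tau>. pi_tree (rho e) = s})"
proof -
  have "Psibar (frag_of \<tau>) = (\<Sum>e\<in>E \<tau>. frag_of (pi_tree (rho e)))"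
    unfolding Psibar_def Psi_def pi_lin_def using E_finite[of \<tau>]
    by (simp add: Psi_basis_E frag_extend_sum comp_def)
  then have "Poly_Mapping.lookup (Psibar (frag_of \<tau>)) s = (\<Sum>e\<in>E \<tau>. if pi_tree (rho e) = s then 1 else 0)"
    by (simp add: lookup_sum eq_commute)
  also have "\<dots> = int (card {e \<in> E \<tau>. pi_tree (rho e) = s})"
    using E_finite[of \<tau>] by (simp add: sum.If_cases Int_def)
  finally show ?thesis .
qed


section \<open>Counting b_tilde\<close>

definition Bset :: "ptree \<Rightarrow> ptree \<Rightarrow> (vertex \<Rightarrow> vertex) set" where
  "Bset \<sigma> \<tau> = {\<phi> \<in> verts \<sigma> \<rightarrow>\<^sub>E verts \<tau>. bij_betw \<phi> (verts \<sigma>) (verts \<tau>) \<and>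
       (\<forall>v\<in>verts \<sigma>. \<forall>w\<in>verts \<sigma>. vless v w \<longrightarrow> llless \<tau> (\<phi> v) (\<phi> w)) \<and>
       (\<forall>x\<in>verts \<tau>. \<forall>y\<in>verts \<tau>. vless x y \<longrightarrow>
           vless (inv_into (verts \<sigma>) \<phi> x) (inv_into (verts \<sigma>) \<phi> y))}"

definition G :: "ptree \<Rightarrow> entry \<Rightarrow> (vertex \<Rightarrow> vertex) set" where
  "G \<sigma> e = (\<lambda>\<psi>. restrict (th e \<circ> \<psi>) (verts \<sigma>)) ` Iso \<sigma> (rho e)"

lemma G_img:
  assumes g: "good \<tau> e" and \<psi>: "\<psi> \<in> Iso \<sigma> (rho e)"
  shows "img (restrict (th e \<circ> \<psi>) (verts \<sigma>)) (rel \<sigma>) = RR e"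
proof -
  have pb: "bij_betw \<psi> (verts \<sigma>) (verts (rho e))"
    and pv: "\<And>a b. a \<in> verts \<sigma> \<Longrightarrow> b \<in> verts \<sigma> \<Longrightarrow> vless a b \<longleftrightarrow> vless (\<psi> a) (\<psi> b)"
    using \<psi> unfolding Iso_def by auto
  have R: "RR e = img (th e) (rel (rho e))" using g by (simp add: good_def)
  have pim: "\<psi> ` verts \<sigma> = verts (rho e)" using pb by (simp add: bij_betw_def)
  show ?thesis
  proof
    show "img (restrict (th e \<circ> \<psi>) (verts \<sigma>)) (rel \<sigma>) \<subseteq> RR e"
    proof
      fix z assume "z \<in> img (restrict (th e \<circ> \<psi>) (verts \<sigma>)) (rel \<sigma>)"
      then obtain a b where ab: "z = (th e (\<psi> a), th e (\<psi> b))" "a \<in> verts \<sigma>" "b \<in> verts \<sigma>" "vless a b"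
        by (auto simp: img_def rel_def)
      have "(\<psi> a, \<psi> b) \<in> rel (rho e)" using ab pv pim by (auto simp: rel_def)
      then show "z \<in> RR e" using ab R by (auto simp: img_def)
    qed
    show "RR e \<subseteq> img (restrict (th e \<circ> \<psi>) (verts \<sigma>)) (rel \<sigma>)"
    proof
      fix z assume "z \<in> RR e"
      then obtain a b where ab: "z = (th e a, th e b)" "a \<in> verts (rho e)" "b \<in> verts (rho e)" "vless a b"
        using R by (auto simp: img_def rel_def)
      obtain a' where a': "a' \<in> verts \<sigma>" "\<psi> a' = a" using ab pim by (metis imageE)
      obtain b' where b': "b' \<in> verts \<sigma>" "\<psi> b' = b" using ab pim by (metis imageE)
      have "(a', b') \<in> rel \<sigma>" using a' b' ab pv by (auto simp: rel_def)
      moreover have "z = map_prod (restrict (th e \<circ> \<psi>) (verts \<sigma>)) (restrict (th e \<circ> \<psi>) (verts \<sigma>)) (a', b')"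
        using ab a' b' by simp
      ultimately show "z \<in> img (restrict (th e \<circ> \<psi>) (verts \<sigma>)) (rel \<sigma>)" unfolding img_def by blast
    qed
  qed
qed

lemma G_sub:
  assumes e: "e \<in> E \<tau>" shows "G \<sigma> e \<subseteq> Bset \<sigma> \<tau>"
proof
  fix \<phi> assume "\<phi> \<in> G \<sigma> e"
  then obtain \<psi> where \<psi>: "\<psi> \<in> Iso \<sigma> (rho e)" and \<phi>: "\<phi> = restrict (th e \<circ> \<psi>) (verts \<sigma>)"
    unfolding G_def by blast
  have g: "good \<tau> e" using E_good e by blast
  have tb: "bij_betw (th e) (verts (rho e)) (verts \<tau>)" and R: "RR e = img (th e) (rel (rho e))"
    and s: "rel \<tau> \<subseteq> RR e" and l: "RR e \<subseteq> LL \<tau>" using g by (auto simp: good_def)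
  have pb: "bij_betw \<psi> (verts \<sigma>) (verts (rho e))"
    using \<psi> unfolding Iso_def by auto
  have b: "bij_betw \<phi> (verts \<sigma>) (verts \<tau>)"
    unfolding \<phi> using bij_betw_trans[OF pb tb] by (rule bij_betw_cong[THEN iffD1, rotated]) simp
  have imgR: "img \<phi> (rel \<sigma>) = RR e" using G_img[OF g \<psi>] \<phi> by simp
  have inj: "inj_on \<phi> (verts \<sigma>)" using b by (simp add: bij_betw_def)
  have c1: "llless \<tau> (\<phi> v) (\<phi> w)" if "v \<in> verts \<sigma>" "w \<in> verts \<sigma>" "vless v w" for v w
  proof -
    have "(\<phi> v, \<phi> w) \<in> img \<phi> (rel \<sigma>)" using that by (auto simp: img_def rel_def)
    then show ?thesis using imgR l by (auto simp: LL_def)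
  qed
  have c2: "vless (inv_into (verts \<sigma>) \<phi> x) (inv_into (verts \<sigma>) \<phi> y)"
    if "x \<in> verts \<tau>" "y \<in> verts \<tau>" "vless x y" for x y
  proof -
    have "(x, y) \<in> img \<phi> (rel \<sigma>)" using that s imgR by (auto simp: rel_def)
    then obtain a b where "x = \<phi> a" "y = \<phi> b" "a \<in> verts \<sigma>" "b \<in> verts \<sigma>" "vless a b"
      by (auto simp: img_def rel_def)
    then show ?thesis using inj by (simp add: inv_into_f_f)
  qed
  have "\<phi> \<in> verts \<sigma> \<rightarrow>\<^sub>E verts \<tau>" using b unfolding \<phi> by (auto simp: bij_betw_def)
  then show "\<phi> \<in> Bset \<sigma> \<tau>" unfolding Bset_def using b c1 c2 by blast
qed

lemma Bset_sub: "Bset \<sigma> \<tau> \<subseteq> (\<Union>e\<in>E \<tau>. G \<sigma> e)"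
proof
  fix \<phi> assume "\<phi> \<in> Bset \<sigma> \<tau>"
  then have pe: "\<phi> \<in> verts \<sigma> \<rightarrow>\<^sub>E verts \<tau>" and b: "bij_betw \<phi> (verts \<sigma>) (verts \<tau>)"
    and c1: "\<And>v w. v \<in> verts \<sigma> \<Longrightarrow> w \<in> verts \<sigma> \<Longrightarrow> vless v w \<Longrightarrow> llless \<tau> (\<phi> v) (\<phi> w)"
    and c2: "\<And>x y. x \<in> verts \<tau> \<Longrightarrow> y \<in> verts \<tau> \<Longrightarrow> vless x y \<Longrightarrow>
           vless (inv_into (verts \<sigma>) \<phi> x) (inv_into (verts \<sigma>) \<phi> y)"
    unfolding Bset_def by auto
  have inj: "inj_on \<phi> (verts \<sigma>)" and im: "\<phi> ` verts \<sigma> = verts \<tau>" using b by (auto simp: bij_betw_def)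
  let ?R = "img \<phi> (rel \<sigma>)"
  have "Lprop \<tau> ?R"
    unfolding Lprop_def
  proof (intro conjI allI impI)
    show "trans ?R" using img_rel_trans[OF inj] .
    fix x y z assume xz: "(x, z) \<in> ?R" and yz: "(y, z) \<in> ?R"
    obtain a c where ac: "x = \<phi> a" "z = \<phi> c" "a \<in> verts \<sigma>" "c \<in> verts \<sigma>" "vless a c"
      using xz by (auto simp: img_def rel_def)
    obtain b c' where bc: "y = \<phi> b" "z = \<phi> c'" "b \<in> verts \<sigma>" "c' \<in> verts \<sigma>" "vless b c'"
      using yz by (auto simp: img_def rel_def)
    have "c = c'" using inj ac bc by (auto dest: inj_onD)
    then have "prefix a c" "prefix b c" using ac bc by (auto simp: vless_def)
    then have "prefix a b \<or> prefix b a" using prefix_same_cases by blast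
    then have "a = b \<or> vless a b \<or> vless b a" by (auto simp: vless_def)
    then show "x = y \<or> (x, y) \<in> ?R \<or> (y, x) \<in> ?R"
      using ac bc by (auto simp: img_def rel_def)
  next
    show "rel \<tau> \<subseteq> ?R"
    proof
      fix z assume "z \<in> rel \<tau>"
      then obtain x y where xy: "z = (x,y)" "x \<in> verts \<tau>" "y \<in> verts \<tau>" "vless x y" by (auto simp: rel_def)
      let ?a = "inv_into (verts \<sigma>) \<phi> x" and ?b = "inv_into (verts \<sigma>) \<phi> y"
      have "?a \<in> verts \<sigma>" "?b \<in> verts \<sigma>" "\<phi> ?a = x" "\<phi> ?b = y"
        using xy im by (auto simp: inv_into_into f_inv_into_f)
      moreover have "vless ?a ?b" using c2 xy by blast
      ultimately have "(?a, ?b) \<in> rel \<sigma>" "z = map_prod \<phi> \<phi> (?a, ?b)" using xy by (auto simp: rel_def)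
      then show "z \<in> ?R" unfolding img_def by blast
    qed
  next
    show "?R \<subseteq> LL \<tau>"
    proof
      fix z assume "z \<in> ?R"
      then obtain a b where "z = (\<phi> a, \<phi> b)" "a \<in> verts \<sigma>" "b \<in> verts \<sigma>" "vless a b"
        by (auto simp: img_def rel_def)
      then show "z \<in> LL \<tau>" using c1 im by (auto simp: LL_def)
    qed
  qed
  then obtain e where e: "e \<in> E \<tau>" "RR e = ?R" using E_complete by blast
  have g: "good \<tau> e" using E_good e by blast
  have tb: "bij_betw (th e) (verts (rho e)) (verts \<tau>)" and R: "RR e = img (th e) (rel (rho e))"
    using g by (auto simp: good_def)
  have tinj: "inj_on (th e) (verts (rho e))" and tim: "th e ` verts (rho e) = verts \<tau>"
    using tb by (auto simp: bij_betw_def)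
  define \<psi> where "\<psi> = restrict (inv_into (verts (rho e)) (th e) \<circ> \<phi>) (verts \<sigma>)"
  have \<psi>b: "bij_betw \<psi> (verts \<sigma>) (verts (rho e))"
    unfolding \<psi>_def using bij_betw_trans[OF b bij_betw_inv_into[OF tb]]
    by (rule bij_betw_cong[THEN iffD1, rotated]) simp
  have \<psi>in: "\<psi> a \<in> verts (rho e)" if "a \<in> verts \<sigma>" for a using \<psi>b that by (auto simp: bij_betw_def)
  have th\<psi>: "th e (\<psi> a) = \<phi> a" if "a \<in> verts \<sigma>" for a
  proof -
    have "\<phi> a \<in> th e ` verts (rho e)" using that im tim by blast
    then show ?thesis unfolding \<psi>_def using that by (simp add: f_inv_into_f)
  qed
  have "\<psi> \<in> Iso \<sigma> (rho e)"
    unfolding Iso_def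
  proof (intro CollectI conjI ballI)
    show "\<psi> \<in> verts \<sigma> \<rightarrow>\<^sub>E verts (rho e)" using \<psi>in unfolding \<psi>_def by auto
    show "bij_betw \<psi> (verts \<sigma>) (verts (rho e))" by (rule \<psi>b)
    fix a b assume ab: "a \<in> verts \<sigma>" "b \<in> verts \<sigma>"
    have "vless a b \<longleftrightarrow> (\<phi> a, \<phi> b) \<in> ?R" using img_mem[OF inj ab] by simp
    also have "\<dots> \<longleftrightarrow> (th e (\<psi> a), th e (\<psi> b)) \<in> img (th e) (rel (rho e))" using e R th\<psi> ab by simp
    also have "\<dots> \<longleftrightarrow> vless (\<psi> a) (\<psi> b)" using img_mem[OF tinj \<psi>in[OF ab(1)] \<psi>in[OF ab(2)]] by simp
    finally show "vless a b \<longleftrightarrow> vless (\<psi> a) (\<psi> b)" .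
  qed
  moreover have "\<phi> = restrict (th e \<circ> \<psi>) (verts \<sigma>)"
  proof (rule HOL.ext)
    fix x show "\<phi> x = restrict (th e \<circ> \<psi>) (verts \<sigma>) x"
      using th\<psi> pe by (auto simp: PiE_def extensional_def)
  qed
  ultimately have "\<phi> \<in> G \<sigma> e" unfolding G_def by blast
  then show "\<phi> \<in> (\<Union>e\<in>E \<tau>. G \<sigma> e)" using e by blast
qed

lemma card_G:
  assumes e: "e \<in> E \<tau>"
  shows "card (G \<sigma> e) = (if pi_tree \<sigma> = pi_tree (rho e) then sym_factor \<sigma> else 0)"
proof -
  have g: "good \<tau> e" using E_good e by blast
  have tinj: "inj_on (th e) (verts (rho e))" using g by (auto simp: good_def bij_betw_def)
  have "inj_on (\<lambda>\<psi>. restrict (th e \<circ> \<psi>) (verts \<sigma>)) (Iso \<sigma> (rho e))"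
  proof (rule inj_onI)
    fix \<psi> \<psi>' assume p: "\<psi> \<in> Iso \<sigma> (rho e)" "\<psi>' \<in> Iso \<sigma> (rho e)"
      and eq: "restrict (th e \<circ> \<psi>) (verts \<sigma>) = restrict (th e \<circ> \<psi>') (verts \<sigma>)"
    show "\<psi> = \<psi>'"
    proof (rule HOL.ext)
      fix x show "\<psi> x = \<psi>' x"
      proof (cases "x \<in> verts \<sigma>")
        case True
        then have "th e (\<psi> x) = th e (\<psi>' x)" using fun_cong[OF eq, of x] by simp
        moreover have "\<psi> x \<in> verts (rho e)" "\<psi>' x \<in> verts (rho e)" using p True unfolding Iso_def by auto
        ultimately show ?thesis using tinj by (auto dest: inj_onD)
      next
        case False
        then show ?thesis using p unfolding Iso_def by (auto simp: PiE_def extensional_def)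
      qed
    qed
  qed
  then have "card (G \<sigma> e) = card (Iso \<sigma> (rho e))" unfolding G_def by (rule card_image)
  also have "\<dots> = (if pi_tree \<sigma> = pi_tree (rho e) then sym_factor \<sigma> else 0)"
  proof (cases "pi_tree \<sigma> = pi_tree (rho e)")
    case True
    then obtain \<psi> where "\<psi> \<in> Iso \<sigma> (rho e)" using pi_Iso by blast
    then have "card (Iso \<sigma> (rho e)) = card (Iso \<sigma> \<sigma>)" by (rule Iso_card)
    then show ?thesis using True sym_factor_Iso[of \<sigma>] by simp
  next
    case False
    then have "Iso \<sigma> (rho e) = {}" using Iso_pi by blast
    then show ?thesis using False by simp
  qed
  finally show ?thesis .
qed

lemma finite_Iso: "finite (Iso \<sigma> \<rho>)"
proof -
  have "Iso \<sigma> \<rho> \<subseteq> verts \<sigma> \<rightarrow>\<^sub>E verts \<rho>" unfolding Iso_def by auto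
  moreover have "finite (verts \<sigma> \<rightarrow>\<^sub>E verts \<rho>)" by (rule finite_PiE[OF finite_verts]) (rule finite_verts)
  ultimately show ?thesis by (rule finite_subset)
qed

lemma b_tilde_count:
  "b_tilde \<sigma> \<tau> = sym_factor \<sigma> * card {e \<in> E \<tau>. pi_tree (rho e) = pi_tree \<sigma>}"
proof -
  have "(\<Union>e\<in>E \<tau>. G \<sigma> e) \<subseteq> Bset \<sigma> \<tau>" using G_sub by (rule UN_least)
  then have "Bset \<sigma> \<tau> = (\<Union>e\<in>E \<tau>. G \<sigma> e)" using Bset_sub by (rule subset_antisym[rotated])
  have "b_tilde \<sigma> \<tau> = card (Bset \<sigma> \<tau>)" unfolding b_tilde_def Bset_def by (rule refl)
  also have "\<dots> = card (\<Union>e\<in>E \<tau>. G \<sigma> e)" using \<open>Bset \<sigma> \<tau> = _\<close> by (rule arg_cong)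
  also have "\<dots> = (\<Sum>e\<in>E \<tau>. card (G \<sigma> e))"
  proof (rule card_UN_disjoint)
    show "finite (E \<tau>)" by (rule E_finite)
    show "\<forall>e\<in>E \<tau>. finite (G \<sigma> e)" unfolding G_def using finite_Iso by (simp add: finite_imageI)
    show "\<forall>e\<in>E \<tau>. \<forall>e'\<in>E \<tau>. e \<noteq> e' \<longrightarrow> G \<sigma> e \<inter> G \<sigma> e' = {}"
    proof (intro ballI impI)
      fix e e' assume e: "e \<in> E \<tau>" "e' \<in> E \<tau>" "e \<noteq> e'"
      show "G \<sigma> e \<inter> G \<sigma> e' = {}"
      proof (rule ccontr)
        assume "G \<sigma> e \<inter> G \<sigma> e' \<noteq> {}"
        then obtain \<phi> where "\<phi> \<in> G \<sigma> e" "\<phi> \<in> G \<sigma> e'" by blast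
        then obtain \<psi> \<psi>' where p: "\<psi> \<in> Iso \<sigma> (rho e)" "\<phi> = restrict (th e \<circ> \<psi>) (verts \<sigma>)"
          "\<psi>' \<in> Iso \<sigma> (rho e')" "\<phi> = restrict (th e' \<circ> \<psi>') (verts \<sigma>)" unfolding G_def by blast
        have "img \<phi> (rel \<sigma>) = RR e" using G_img[OF E_good[OF e(1)] p(1)] p(2) by simp
        moreover have "img \<phi> (rel \<sigma>) = RR e'" using G_img[OF E_good[OF e(2)] p(3)] p(4) by simp
        ultimately have "RR e = RR e'" by simp
        then have "e = e'" using inj_onD[OF E_inj[of \<tau>]] e(1,2) by blast
        then show False using e(3) by simp
      qed
    qed
  qed
  also have "\<dots> = (\<Sum>e\<in>E \<tau>. if pi_tree \<sigma> = pi_tree (rho e) then sym_factor \<sigma> else 0)"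
    by (rule sum.cong[OF refl]) (rule card_G)
  also have "\<dots> = sym_factor \<sigma> * card {e \<in> E \<tau>. pi_tree (rho e) = pi_tree \<sigma>}"
  proof -
    have "(\<Sum>e\<in>E \<tau>. if pi_tree \<sigma> = pi_tree (rho e) then sym_factor \<sigma> else 0) =
          (\<Sum>e\<in>{e \<in> E \<tau>. pi_tree (rho e) = pi_tree \<sigma>}. sym_factor \<sigma>)"
      using sum.inter_filter[OF E_finite[of \<tau>], of "\<lambda>_. sym_factor \<sigma>" "\<lambda>e. pi_tree (rho e) = pi_tree \<sigma>"]
      by (simp add: eq_commute[of "pi_tree \<sigma>"])
    then show ?thesis by simp
  qed
  finally show ?thesis .
qed

lemma sym_pos: "sym_factor \<sigma> > 0"
proof -
  obtain \<psi> where "\<psi> \<in> Iso \<sigma> \<sigma>" using pi_Iso by blast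
  then have "Iso \<sigma> \<sigma> \<noteq> {}" by blast
  then show ?thesis using finite_Iso sym_factor_Iso by (simp add: card_gt_0_iff)
qed

theorem theorem2p4:
  fixes \<tau> \<sigma> :: ptree and s :: rtree
  assumes "pi_tree \<sigma> = s"
  shows "Poly_Mapping.lookup (Psibar (frag_of \<tau>)) s \<ge> 0 \<and>
         (of_int :: int \<Rightarrow> rat) (Poly_Mapping.lookup (Psibar (frag_of \<tau>)) s)
           = (of_nat :: nat \<Rightarrow> rat) (b_tilde \<sigma> \<tau>) / (of_nat :: nat \<Rightarrow> rat) (sym_factor \<sigma>)"
proof -
  define c where "c = card {e \<in> E \<tau>. pi_tree (rho e) = s}"
  have l: "Poly_Mapping.lookup (Psibar (frag_of \<tau>)) s = int c" unfolding c_def by (rule lookup_Psibar)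
  have b: "b_tilde \<sigma> \<tau> = sym_factor \<sigma> * c" unfolding c_def using b_tilde_count assms by simp
  have p: "(of_nat (sym_factor \<sigma>) :: rat) \<noteq> 0" using sym_pos by simp
  show ?thesis using l b p by simp
qed

end
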